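(* Let $\theta\in\mathbb{R}$, let $G$ be a graph with maximum degree at most $D$, and let $u$ be a $\theta$-positive vertex of $G$. Then $\nu_{G,u}$ has no extended states at $\theta$, i.e. \[\lim_{\varepsilon\to0+}\frac{\nu_{G,u}([\theta-\varepsilon,\theta+\varepsilon])-\nu_{G,u}(\{\theta\})}{\varepsilon}=0.\]
   Context: Matching measure: for a (not necessarily connected) graph $G$ and vertex $u$, $\nu_{G,u}$ is the spectral measure at the one-vertex path $u$ of the adjacency operator of the path tree $T(G,u)$ (vertices: finite paths in $G$ starting at $u$; two paths adjacent iff one is obtained from the other by deleting its last vertex). $G-u$ denotes $G$ with $u$ deleted. A vertex $u$ is $\theta$-positive in $G$ if $\sum_{v\sim u}\nu_{G-u,v}(\{\theta\})>0$, the sum over neighbors $v$ of $u$. *)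

theory Defs
  imports "HOL-Probability.Probability"
begin

text \<open>A (possibly infinite, simple) graph is given by a vertex set V and a
symmetric irreflexive edge relation E; only edges between vertices of V count.\<close>

definition simple_graph :: "'a set \<Rightarrow> ('a \<Rightarrow> 'a \<Rightarrow> bool) \<Rightarrow> bool" where
  "simple_graph V E \<longleftrightarrow> (\<forall>x y. E x y \<longrightarrow> E y x) \<and> (\<forall>x. \<not> E x x)"

definition nbrs :: "'a set \<Rightarrow> ('a \<Rightarrow> 'a \<Rightarrow> bool) \<Rightarrow> 'a \<Rightarrow> 'a set" where
  "nbrs V E x = {y \<in> V. E x y}"

definition max_degree_le :: "'a set \<Rightarrow> ('a \<Rightarrow> 'a \<Rightarrow> bool) \<Rightarrow> nat \<Rightarrow> bool" where
  "max_degree_le V E D \<longleftrightarrow> (\<forall>x\<in>V. finite (nbrs V E x) \<and> card (nbrs V E x) \<le> D)"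

definition is_path_from :: "'a set \<Rightarrow> ('a \<Rightarrow> 'a \<Rightarrow> bool) \<Rightarrow> 'a \<Rightarrow> 'a list \<Rightarrow> bool" where
  "is_path_from V E u p \<longleftrightarrow> p \<noteq> [] \<and> hd p = u \<and> distinct p \<and> set p \<subseteq> V \<and>
     (\<forall>i. Suc i < length p \<longrightarrow> E (p ! i) (p ! Suc i))"

definition path_tree_adj :: "'a set \<Rightarrow> ('a \<Rightarrow> 'a \<Rightarrow> bool) \<Rightarrow> 'a \<Rightarrow> 'a list \<Rightarrow> 'a list \<Rightarrow> bool" where
  "path_tree_adj V E u p q \<longleftrightarrow> is_path_from V E u p \<and> is_path_from V E u q \<and>
     ((\<exists>v. q = p @ [v]) \<or> (\<exists>v. p = q @ [v]))"

text \<open>Number of closed walks of length k at the root [u] of T(G,u); this is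
the k-th matrix entry of the adjacency operator, i.e. A^k at the root.\<close>
definition closed_walks_root :: "'a set \<Rightarrow> ('a \<Rightarrow> 'a \<Rightarrow> bool) \<Rightarrow> 'a \<Rightarrow> nat \<Rightarrow> nat" where
  "closed_walks_root V E u k = card {ws. length ws = Suc k \<and> ws ! 0 = [u] \<and> ws ! k = [u] \<and>
     (\<forall>i<k. path_tree_adj V E u (ws ! i) (ws ! Suc i))}"

text \<open>Matching measure: the spectral measure of the adjacency operator of T(G,u)
at the root, i.e. the Borel probability measure on the reals whose k-th moment
is the (root,root) entry of A^k (unique for bounded degree, since then the
measure is compactly supported).\<close>
definition matching_measure :: "'a set \<Rightarrow> ('a \<Rightarrow> 'a \<Rightarrow> bool) \<Rightarrow> 'a \<Rightarrow> real measure" where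
  "matching_measure V E u = (THE \<mu>. sets \<mu> = sets borel \<and> prob_space \<mu> \<and>
     (\<forall>k. integrable \<mu> (\<lambda>x. x ^ k) \<and> (\<integral>x. x ^ k \<partial>\<mu>) = real (closed_walks_root V E u k)))"

definition theta_positive :: "real \<Rightarrow> 'a set \<Rightarrow> ('a \<Rightarrow> 'a \<Rightarrow> bool) \<Rightarrow> 'a \<Rightarrow> bool" where
  "theta_positive \<theta> V E u \<longleftrightarrow>
     (\<Sum>v\<in>nbrs V E u. measure (matching_measure (V - {u}) E v) {\<theta>}) > 0"

end

theory Submission
  imports Defs "HOL-Computational_Algebra.Polynomial" "HOL-Real_Asymp.Real_Asymp"
begin

definition supp :: "('b \<Rightarrow> real) \<Rightarrow> 'b set" where
  "supp \<psi> = {x. \<psi> x \<noteq> 0}"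

definition ip :: "('b \<Rightarrow> real) \<Rightarrow> ('b \<Rightarrow> real) \<Rightarrow> real" where
  "ip \<psi> \<xi> = (\<Sum>x\<in>supp \<psi>. \<psi> x * \<xi> x)"

definition ind :: "'b \<Rightarrow> 'b \<Rightarrow> real" where
  "ind b = (\<lambda>x. if x = b then 1 else 0)"

lemma ip_eq:
  assumes "finite F" "supp \<psi> \<subseteq> F"
  shows "ip \<psi> \<xi> = (\<Sum>x\<in>F. \<psi> x * \<xi> x)"
  unfolding ip_def
  by (rule sum.mono_neutral_left) (use assms in \<open>auto simp: supp_def\<close>)

lemma ip_sym:
  assumes "finite (supp \<psi>)" "finite (supp \<xi>)"
  shows "ip \<psi> \<xi> = ip \<xi> \<psi>"
proof -
  have "ip \<psi> \<xi> = (\<Sum>x\<in>supp \<psi> \<union> supp \<xi>. \<psi> x * \<xi> x)"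
    by (rule ip_eq) (use assms in auto)
  also have "\<dots> = ip \<xi> \<psi>"
    by (subst ip_eq[of "supp \<psi> \<union> supp \<xi>"]) (use assms in \<open>auto simp: mult.commute\<close>)
  finally show ?thesis .
qed

lemma ip_ind_right: "finite (supp \<psi>) \<Longrightarrow> ip \<psi> (ind b) = \<psi> b"
  by (subst ip_eq[of "insert b (supp \<psi>)"]) (auto simp: ind_def supp_def if_distrib cong: if_cong)

lemma supp_ind [simp]: "supp (ind b) = {b}"
  by (auto simp: supp_def ind_def)

lemma ip_nonneg: "0 \<le> ip \<psi> \<psi>"
  unfolding ip_def by (auto intro: sum_nonneg)

lemma ip_CS:
  assumes "finite (supp \<psi>)" "finite (supp \<xi>)"
  shows "(ip \<psi> \<xi>)\<^sup>2 \<le> ip \<psi> \<psi> * ip \<xi> \<xi>"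
proof -
  let ?F = "supp \<psi> \<union> supp \<xi>"
  have "ip \<psi> \<xi> = (\<Sum>x\<in>?F. \<psi> x * \<xi> x)" "ip \<psi> \<psi> = (\<Sum>x\<in>?F. (\<psi> x)\<^sup>2)"
       "ip \<xi> \<xi> = (\<Sum>x\<in>?F. (\<xi> x)\<^sup>2)"
    by (subst ip_eq[of ?F]; use assms in \<open>auto simp: power2_eq_square\<close>)+
  then show ?thesis using Cauchy_Schwarz_ineq_sum by metis
qed

lemma ip_CS_abs:
  assumes "finite (supp \<psi>)" "finite (supp \<xi>)"
  shows "\<bar>ip \<psi> \<xi>\<bar> \<le> sqrt (ip \<psi> \<psi>) * sqrt (ip \<xi> \<xi>)"
proof -
  have "sqrt ((ip \<psi> \<xi>)\<^sup>2) \<le> sqrt (ip \<psi> \<psi> * ip \<xi> \<xi>)"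
    using ip_CS[OF assms] real_sqrt_le_iff by blast
  then show ?thesis by (simp add: real_sqrt_mult)
qed

lemma ip_add_left:
  assumes "finite (supp \<psi>)" "finite (supp \<phi>)"
  shows "ip (\<lambda>x. \<psi> x + \<phi> x) \<xi> = ip \<psi> \<xi> + ip \<phi> \<xi>"
proof -
  let ?F = "supp \<psi> \<union> supp \<phi>"
  have "ip (\<lambda>x. \<psi> x + \<phi> x) \<xi> = (\<Sum>x\<in>?F. (\<psi> x + \<phi> x) * \<xi> x)"
    by (rule ip_eq) (use assms in \<open>auto simp: supp_def\<close>)
  moreover have "ip \<psi> \<xi> = (\<Sum>x\<in>?F. \<psi> x * \<xi> x)" "ip \<phi> \<xi> = (\<Sum>x\<in>?F. \<phi> x * \<xi> x)"
    by (rule ip_eq; use assms in auto)+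
  ultimately show ?thesis by (simp add: algebra_simps sum.distrib)
qed

lemma ip_scale_left:
  "ip (\<lambda>x. c * \<psi> x) \<xi> = c * ip \<psi> \<xi>"
proof (cases "c = 0")
  case True then show ?thesis by (simp add: ip_def supp_def)
next
  case False
  then have "supp (\<lambda>x. c * \<psi> x) = supp \<psi>" by (auto simp: supp_def)
  then show ?thesis by (simp add: ip_def sum_distrib_left mult.assoc)
qed

lemma supp_add: "supp (\<lambda>x. \<psi> x + \<phi> x) \<subseteq> supp \<psi> \<union> supp \<phi>"
  by (auto simp: supp_def)
lemma supp_scale: "supp (\<lambda>x. c * \<psi> x) \<subseteq> supp \<psi>"
  by (auto simp: supp_def)
lemma fsupp_add: "finite (supp \<psi>) \<Longrightarrow> finite (supp \<phi>) \<Longrightarrow> finite (supp (\<lambda>x. \<psi> x + \<phi> x))"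
  by (rule finite_subset[OF supp_add]) auto
lemma fsupp_scale: "finite (supp \<psi>) \<Longrightarrow> finite (supp (\<lambda>x. c * \<psi> x))"
  by (rule finite_subset[OF supp_scale]) auto

locale lfg =
  fixes R :: "'b \<Rightarrow> 'b \<Rightarrow> bool" and \<Delta> :: nat
  assumes R_sym: "R p q \<Longrightarrow> R q p"
    and R_fin: "finite {q. R p q}"
    and R_deg: "card {q. R p q} \<le> \<Delta>"
begin

definition nb :: "'b \<Rightarrow> 'b set" where "nb p = {q. R p q}"

lemma nb_fin[simp]: "finite (nb p)" using R_fin by (simp add: nb_def)
lemma nb_card: "card (nb p) \<le> \<Delta>" using R_deg by (simp add: nb_def)

definition Aop :: "('b \<Rightarrow> real) \<Rightarrow> 'b \<Rightarrow> real" where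
  "Aop \<psi> p = (\<Sum>q\<in>nb p. \<psi> q)"

lemma supp_Aop: "supp (Aop \<psi>) \<subseteq> (\<Union>q\<in>supp \<psi>. nb q)"
proof
  fix p assume "p \<in> supp (Aop \<psi>)"
  then have "(\<Sum>q\<in>nb p. \<psi> q) \<noteq> 0" by (simp add: supp_def Aop_def)
  then obtain q where "q \<in> nb p" "\<psi> q \<noteq> 0" by (meson sum.neutral)
  then show "p \<in> (\<Union>q\<in>supp \<psi>. nb q)" using R_sym by (auto simp: nb_def supp_def)
qed

lemma fsupp_Aop: "finite (supp \<psi>) \<Longrightarrow> finite (supp (Aop \<psi>))"
  by (rule finite_subset[OF supp_Aop]) auto

lemma Aop_add: "Aop (\<lambda>x. \<psi> x + \<phi> x) = (\<lambda>x. Aop \<psi> x + Aop \<phi> x)"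
  by (simp add: Aop_def sum.distrib fun_eq_iff)
lemma Aop_scale: "Aop (\<lambda>x. c * \<psi> x) = (\<lambda>x. c * Aop \<psi> x)"
  by (simp add: Aop_def sum_distrib_left fun_eq_iff)
lemma Aop_zero: "Aop (\<lambda>x. 0) = (\<lambda>x. 0)"
  by (simp add: Aop_def fun_eq_iff)

lemma Aop_eq_F:
  assumes "finite F" "supp \<psi> \<subseteq> F"
  shows "Aop \<psi> p = (\<Sum>q\<in>F. if R p q then \<psi> q else 0)"
proof -
  have "Aop \<psi> p = (\<Sum>q\<in>nb p \<inter> F. \<psi> q)"
    unfolding Aop_def by (rule sum.mono_neutral_right) (use assms in \<open>auto simp: supp_def\<close>)
  also have "\<dots> = (\<Sum>q\<in>F. if R p q then \<psi> q else 0)"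
  proof -
    have "nb p \<inter> F = F \<inter> {q. R p q}" by (auto simp: nb_def)
    then show ?thesis by (simp add: sum.inter_restrict[OF assms(1)])
  qed
  finally show ?thesis .
qed

lemma Aop_sym:
  assumes "finite (supp \<psi>)" "finite (supp \<xi>)"
  shows "ip (Aop \<psi>) \<xi> = ip \<psi> (Aop \<xi>)"
proof -
  define F where "F = supp \<psi> \<union> supp \<xi> \<union> supp (Aop \<psi>) \<union> supp (Aop \<xi>)"
  have F: "finite F" using assms fsupp_Aop by (auto simp: F_def)
  have "ip (Aop \<psi>) \<xi> = (\<Sum>p\<in>F. Aop \<psi> p * \<xi> p)"
    by (rule ip_eq) (use F in \<open>auto simp: F_def\<close>)
  also have "\<dots> = (\<Sum>p\<in>F. \<Sum>q\<in>F. (if R p q then \<psi> q * \<xi> p else 0))"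
    by (subst Aop_eq_F[OF F]) (auto simp: F_def sum_distrib_right intro!: sum.cong)
  also have "\<dots> = (\<Sum>q\<in>F. \<Sum>p\<in>F. (if R q p then \<psi> q * \<xi> p else 0))"
    by (subst sum.swap) (use R_sym in \<open>auto intro!: sum.cong\<close>)
  also have "\<dots> = (\<Sum>q\<in>F. \<psi> q * Aop \<xi> q)"
    by (subst Aop_eq_F[OF F]) (auto simp: F_def sum_distrib_left intro!: sum.cong)
  also have "\<dots> = ip \<psi> (Aop \<xi>)"
    by (rule ip_eq[symmetric]) (use F in \<open>auto simp: F_def\<close>)
  finally show ?thesis .
qed

lemma Aop_norm:
  assumes "finite (supp \<psi>)"
  shows "ip (Aop \<psi>) (Aop \<psi>) \<le> (real \<Delta>)\<^sup>2 * ip \<psi> \<psi>"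
proof -
  define F where "F = supp \<psi> \<union> supp (Aop \<psi>)"
  have F: "finite F" using assms fsupp_Aop by (auto simp: F_def)
  have "ip (Aop \<psi>) (Aop \<psi>) = (\<Sum>p\<in>F. (Aop \<psi> p)\<^sup>2)"
    by (subst ip_eq[OF F]) (auto simp: F_def power2_eq_square)
  also have "\<dots> \<le> (\<Sum>p\<in>F. real \<Delta> * (\<Sum>q\<in>F. if R p q then (\<psi> q)\<^sup>2 else 0))"
  proof (rule sum_mono)
    fix p assume "p \<in> F"
    have "(Aop \<psi> p)\<^sup>2 \<le> (\<Sum>q\<in>nb p. (\<psi> q)\<^sup>2) * card (nb p)"
      unfolding Aop_def by (rule sum_squared_le_sum_of_squares)
    also have "\<dots> \<le> (\<Sum>q\<in>nb p. (\<psi> q)\<^sup>2) * real \<Delta>"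
      by (rule mult_left_mono) (auto intro: sum_nonneg simp: nb_card)
    also have "(\<Sum>q\<in>nb p. (\<psi> q)\<^sup>2) = Aop (\<lambda>q. (\<psi> q)\<^sup>2) p" by (simp add: Aop_def)
    also have "\<dots> = (\<Sum>q\<in>F. if R p q then (\<psi> q)\<^sup>2 else 0)"
      by (rule Aop_eq_F[OF F]) (auto simp: F_def supp_def)
    finally show "(Aop \<psi> p)\<^sup>2 \<le> real \<Delta> * (\<Sum>q\<in>F. if R p q then (\<psi> q)\<^sup>2 else 0)"
      by (simp add: mult.commute)
  qed
  also have "\<dots> = real \<Delta> * (\<Sum>p\<in>F. \<Sum>q\<in>F. if R p q then (\<psi> q)\<^sup>2 else 0)"
    by (simp add: sum_distrib_left)
  also have "\<dots> = real \<Delta> * (\<Sum>q\<in>F. \<Sum>p\<in>F. if R p q then (\<psi> q)\<^sup>2 else 0)"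
    by (subst sum.swap) (rule refl)
  also have "\<dots> = real \<Delta> * (\<Sum>q\<in>F. (\<psi> q)\<^sup>2 * (\<Sum>p\<in>F. if R q p then 1 else 0))"
    by (intro arg_cong[where f="\<lambda>x. real \<Delta> * x"] sum.cong refl)
       (auto simp: sum_distrib_left intro!: sum.cong dest: R_sym)
  also have "\<dots> \<le> real \<Delta> * (\<Sum>q\<in>F. (\<psi> q)\<^sup>2 * real \<Delta>)"
  proof (rule mult_left_mono, rule sum_mono)
    fix q assume "q \<in> F"
    have "(\<Sum>p\<in>F. if R q p then 1 else 0) = real (card (F \<inter> nb q))"
      by (simp add: sum.If_cases F nb_def Int_def)
    also have "\<dots> \<le> real \<Delta>"
      using nb_card card_mono[OF nb_fin, of "F \<inter> nb q" q] by (simp add: order_trans)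
    finally show "(\<psi> q)\<^sup>2 * (\<Sum>p\<in>F. if R q p then 1 else 0) \<le> (\<psi> q)\<^sup>2 * real \<Delta>"
      by (simp add: mult_left_mono)
  qed simp
  also have "\<dots> = (real \<Delta>)\<^sup>2 * (\<Sum>q\<in>F. (\<psi> q)\<^sup>2)"
    by (simp add: sum_distrib_left sum_distrib_right power2_eq_square mult_ac)
  also have "(\<Sum>q\<in>F. (\<psi> q)\<^sup>2) = ip \<psi> \<psi>"
    by (subst ip_eq[OF F]) (auto simp: F_def power2_eq_square)
  finally show ?thesis .
qed

end

lemma ip_add_right:
  "ip \<psi> (\<lambda>x. \<xi> x + \<phi> x) = ip \<psi> \<xi> + ip \<psi> \<phi>"
  by (simp add: ip_def algebra_simps sum.distrib)

lemma ip_scale_right: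
  "ip \<psi> (\<lambda>x. c * \<xi> x) = c * ip \<psi> \<xi>"
  by (simp add: ip_def sum_distrib_left mult_ac)

lemma supp_zero[simp]: "supp (\<lambda>x. 0) = {}"
  by (simp add: supp_def)

context lfg
begin

lemma Aop_zero_app[simp]: "Aop (\<lambda>x. 0) p = 0"
  by (simp add: Aop_def)

definition pop :: "real poly \<Rightarrow> ('b \<Rightarrow> real) \<Rightarrow> 'b \<Rightarrow> real" where
  "pop p \<psi> = fold_coeffs (\<lambda>a f x. a * \<psi> x + Aop f x) p (\<lambda>x. 0)"

lemma pop_0[simp]: "pop 0 \<psi> = (\<lambda>x. 0)"
  by (simp add: pop_def)

lemma pop_pCons[simp]: "pop (pCons a p) \<psi> = (\<lambda>x. a * \<psi> x + Aop (pop p \<psi>) x)"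
proof (cases "p = 0 \<and> a = 0")
  case True
  then show ?thesis by (simp add: Aop_zero pop_def)
next
  case False
  then show ?thesis
    by (cases "a = 0") (auto simp: pop_def)
qed

lemma pop_add: "pop (p + q) \<psi> = (\<lambda>x. pop p \<psi> x + pop q \<psi> x)"
proof (induct p arbitrary: q rule: pCons_induct)
  case 0 then show ?case by simp
next
  case (pCons a p)
  show ?case
  proof (cases q rule: pCons_cases)
    case (pCons b q')
    then show ?thesis using pCons.hyps(2)[of q'] by (simp add: Aop_add algebra_simps)
  qed
qed

lemma pop_smult: "pop (smult c p) \<psi> = (\<lambda>x. c * pop p \<psi> x)"
  by (induct p rule: pCons_induct) (auto simp: Aop_scale algebra_simps Aop_zero)

lemma pop_mult: "pop (p * q) \<psi> = pop p (pop q \<psi>)"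
  by (induct p rule: pCons_induct) (auto simp: pop_add pop_smult)

lemma pop_const[simp]: "pop [:c:] \<psi> = (\<lambda>x. c * \<psi> x)"
  by (simp add: Aop_zero)

lemma pop_1[simp]: "pop 1 \<psi> = \<psi>"
  by (simp add: one_pCons Aop_zero)

lemma pop_X: "pop [:0, 1:] \<psi> = Aop \<psi>"
  by (simp add: Aop_zero)

lemma pop_Aop: "pop p (Aop \<psi>) = Aop (pop p \<psi>)"
proof -
  have "pop p (Aop \<psi>) = pop (p * [:0,1:]) \<psi>" by (simp only: pop_mult pop_X)
  also have "\<dots> = pop ([:0,1:] * p) \<psi>" by (simp only: mult.commute)
  also have "\<dots> = Aop (pop p \<psi>)" by (simp only: pop_mult pop_X)
  finally show ?thesis .
qed

lemma pop_diff: "pop (p - q) \<psi> = (\<lambda>x. pop p \<psi> x - pop q \<psi> x)"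
proof -
  have "pop (p - q) \<psi> = pop (p + smult (-1) q) \<psi>" by simp
  then show ?thesis unfolding pop_add pop_smult by simp
qed

lemma fsupp_pop: "finite (supp \<psi>) \<Longrightarrow> finite (supp (pop p \<psi>))"
  by (induct p rule: pCons_induct) (auto intro!: fsupp_add fsupp_scale fsupp_Aop)

lemma pop_sym:
  assumes "finite (supp \<psi>)" "finite (supp \<xi>)"
  shows "ip (pop p \<psi>) \<xi> = ip \<psi> (pop p \<xi>)"
  using assms(2)
proof (induct p arbitrary: \<xi> rule: pCons_induct)
  case 0 then show ?case by (simp add: ip_def)
next
  case (pCons a p)
  have f1: "finite (supp (pop p \<psi>))" using fsupp_pop assms by blast
  have "ip (pop (pCons a p) \<psi>) \<xi> = a * ip \<psi> \<xi> + ip (Aop (pop p \<psi>)) \<xi>"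
    by (simp add: ip_add_left fsupp_scale fsupp_Aop f1 assms ip_scale_left)
  also have "ip (Aop (pop p \<psi>)) \<xi> = ip (pop p \<psi>) (Aop \<xi>)"
    by (rule Aop_sym) (use f1 pCons in auto)
  also have "\<dots> = ip \<psi> (pop p (Aop \<xi>))"
    by (rule pCons.hyps) (use pCons fsupp_Aop in auto)
  also have "\<dots> = ip \<psi> (Aop (pop p \<xi>))" by (simp add: pop_Aop)
  finally show ?case by (simp add: ip_add_right ip_scale_right)
qed

lemma pop_monom: "pop (monom 1 k) \<psi> = (Aop ^^ k) \<psi>"
proof (induct k)
  case 0 then show ?case by (simp add: monom_0)
next
  case (Suc k)
  have "monom (1::real) (Suc k) = [:0,1:] * monom 1 k"
    by (simp add: monom_Suc)
  then show ?case using Suc by (simp add: pop_mult pop_X)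
qed

definition walks :: "nat \<Rightarrow> 'b \<Rightarrow> 'b \<Rightarrow> 'b list set" where
  "walks k a b = {ws. length ws = Suc k \<and> ws ! 0 = a \<and> ws ! k = b \<and>
     (\<forall>i<k. R (ws ! i) (ws ! Suc i))}"

lemma walks_0: "walks 0 a b = (if a = b then {[a]} else {})"
proof -
  have "length ws = Suc 0 \<Longrightarrow> ws = [ws ! 0]" for ws :: "'b list"
    by (cases ws) auto
  then show ?thesis by (auto simp: walks_def)
qed

lemma walks_Suc: "walks (Suc k) a b = (\<lambda>(q, ws). a # ws) ` (SIGMA q:nb a. walks k q b)"
proof (intro set_eqI iffI)
  fix ws assume ws: "ws \<in> walks (Suc k) a b"
  then obtain x ws' where ws_eq: "ws = x # ws'"
    by (cases ws) (auto simp: walks_def)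
  have "length ws' = Suc k" using ws ws_eq by (auto simp: walks_def)
  then have "ws' \<in> walks k (ws' ! 0) b" "x = a" "R a (ws' ! 0)"
    using ws ws_eq by (auto simp: walks_def)
  then show "ws \<in> (\<lambda>(q, ws). a # ws) ` (SIGMA q:nb a. walks k q b)"
    using ws_eq by (auto simp: nb_def intro!: image_eqI[of _ _ "(ws' ! 0, ws')"])
next
  fix ws assume "ws \<in> (\<lambda>(q, ws). a # ws) ` (SIGMA q:nb a. walks k q b)"
  then obtain q ws' where q: "R a q" "ws' \<in> walks k q b" "ws = a # ws'"
    by (auto simp: nb_def)
  have "\<forall>i<Suc k. R (ws ! i) (ws ! Suc i)"
  proof (intro allI impI)
    fix i assume "i < Suc k"
    then show "R (ws ! i) (ws ! Suc i)"
      using q by (cases i) (auto simp: walks_def)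
  qed
  then show "ws \<in> walks (Suc k) a b" using q by (auto simp: walks_def)
qed

lemma walks_count: "finite (walks k a b) \<and> real (card (walks k a b)) = (Aop ^^ k) (ind b) a"
proof (induct k arbitrary: a)
  case 0 then show ?case by (simp add: walks_0 ind_def)
next
  case (Suc k)
  have inj: "inj_on (\<lambda>(q, ws). a # ws) (SIGMA q:nb a. walks k q b)"
    by (auto simp: inj_on_def walks_def)
  have fin: "finite (SIGMA q:nb a. walks k q b)"
    using Suc by (intro finite_SigmaI) auto
  have "real (card (walks (Suc k) a b)) = real (card (SIGMA q:nb a. walks k q b))"
    unfolding walks_Suc by (simp add: card_image[OF inj])
  also have "\<dots> = (\<Sum>q\<in>nb a. real (card (walks k q b)))"
    by (subst card_SigmaI) (use Suc in auto)
  also have "\<dots> = (\<Sum>q\<in>nb a. (Aop ^^ k) (ind b) q)"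
    using Suc by (intro sum.cong) auto
  also have "\<dots> = Aop ((Aop ^^ k) (ind b)) a"
    by (rule Aop_def[symmetric])
  also have "\<dots> = (Aop ^^ Suc k) (ind b) a"
    by simp
  finally show ?case using fin walks_Suc by auto
qed

definition Lf :: "('b \<Rightarrow> real) \<Rightarrow> real poly \<Rightarrow> real" where
  "Lf e p = ip (pop p e) e"

lemma Lf_add: "finite (supp e) \<Longrightarrow> Lf e (p + q) = Lf e p + Lf e q"
  by (simp add: Lf_def pop_add ip_add_left fsupp_pop)

lemma Lf_smult: "Lf e (smult c p) = c * Lf e p"
  by (simp add: Lf_def pop_smult ip_scale_left)

lemma Lf_mult: "finite (supp e) \<Longrightarrow> Lf e (p * q) = ip (pop p e) (pop q e)"
  unfolding Lf_def pop_mult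
  by (subst pop_sym) (auto simp: fsupp_pop ip_sym)

lemma Lf_square_nonneg: "finite (supp e) \<Longrightarrow> 0 \<le> Lf e (p * p)"
  by (simp add: Lf_mult ip_nonneg)

end

definition FF :: "nat \<Rightarrow> nat \<Rightarrow> real" where
  "FF j k = (\<Prod>l<k. (real j - real l))"

lemma FF_fact: "k \<le> j \<Longrightarrow> FF j k = fact j / fact (j - k)"
proof (induct k)
  case 0 then show ?case by (simp add: FF_def)
next
  case (Suc k)
  then have "FF j (Suc k) = fact j / fact (j - k) * (real j - real k)"
    by (simp add: FF_def)
  also have "fact (j - k) = (real j - real k) * fact (j - Suc k)"
    using Suc.prems by (simp add: fact_reduce of_nat_diff)
  also have "fact j / ((real j - real k) * fact (j - Suc k)) * (real j - real k) = fact j / fact (j - Suc k)"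
    using Suc.prems by simp
  finally show ?case .
qed

lemma FF_zero: "j < k \<Longrightarrow> FF j k = 0"
  unfolding FF_def by (rule prod_zero) (auto intro!: bexI[of _ j])

lemma FF_0[simp]: "FF j 0 = 1"
  by (simp add: FF_def)

lemma binom_FF:
  assumes "k \<le> j" "j \<le> n"
  shows "real (n choose j) * FF j k = FF n k * real ((n - k) choose (j - k))"
proof -
  have e: "n - k - (j - k) = n - j" using assms by simp
  show ?thesis
    using assms
    by (simp add: FF_fact binomial_fact e field_simps)
qed

lemma smult_sum_right: "smult c (\<Sum>i\<in>S. f i) = (\<Sum>i\<in>S. smult c (f i))"
  by (induct S rule: infinite_finite_induct) (auto simp: smult_add_right)

lemma bern_identity:
  fixes a b :: "real poly"
  assumes ab: "a + b = 1"
  shows "(\<Sum>j\<le>n. smult (real (n choose j) * FF j k) (a ^ j * b ^ (n - j))) = smult (FF n k) (a ^ k)"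
proof (cases "k \<le> n")
  case False
  then show ?thesis by (simp add: FF_zero)
next
  case True
  have "(\<Sum>j\<le>n. smult (real (n choose j) * FF j k) (a ^ j * b ^ (n - j)))
      = (\<Sum>j\<in>{k..n}. smult (real (n choose j) * FF j k) (a ^ j * b ^ (n - j)))"
    by (rule sum.mono_neutral_right) (auto simp: FF_zero)
  also have "\<dots> = (\<Sum>j\<in>{k..n}. smult (FF n k * real ((n - k) choose (j - k))) (a ^ j * b ^ (n - j)))"
    by (intro sum.cong refl) (use True in \<open>simp add: binom_FF\<close>)
  also have "\<dots> = (\<Sum>i\<in>{0..n-k}. smult (FF n k * real ((n - k) choose i)) (a ^ (i + k) * b ^ (n - k - i)))"
  proof -
    have "{k..n} = {0 + k..(n - k) + k}" using True by simp
    then show ?thesis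
      by (simp only: sum.shift_bounds_cl_nat_ivl) (intro sum.cong refl; simp add: algebra_simps)
  qed
  also have "\<dots> = smult (FF n k) (a ^ k * (\<Sum>i\<le>n-k. of_nat ((n - k) choose i) * a ^ i * b ^ (n - k - i)))"
  proof -
    have t: "of_nat c * x = smult (real c) x" for c and x :: "real poly"
      by (simp add: of_nat_poly)
    have "smult (FF n k) (a ^ k * (\<Sum>i\<le>n-k. of_nat ((n - k) choose i) * a ^ i * b ^ (n - k - i)))
        = (\<Sum>i\<le>n-k. smult (FF n k) (a ^ k * (of_nat ((n - k) choose i) * a ^ i * b ^ (n - k - i))))"
      by (simp only: sum_distrib_left smult_sum_right)
    also have "\<dots> = (\<Sum>i\<le>n-k. smult (FF n k * real ((n - k) choose i)) (a ^ (i + k) * b ^ (n - k - i)))"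
    proof (rule sum.cong[OF refl])
      fix i
      have "a ^ k * (of_nat ((n - k) choose i) * a ^ i * b ^ (n - k - i))
          = of_nat ((n - k) choose i) * (a ^ (i + k) * b ^ (n - k - i))"
        by (simp add: power_add mult_ac)
      then show "smult (FF n k) (a ^ k * (of_nat ((n - k) choose i) * a ^ i * b ^ (n - k - i)))
          = smult (FF n k * real ((n - k) choose i)) (a ^ (i + k) * b ^ (n - k - i))"
        by (simp only: t smult_smult)
    qed
    finally show ?thesis by (simp add: atLeast0AtMost)
  qed
  also have "(\<Sum>i\<le>n-k. of_nat ((n - k) choose i) * a ^ i * b ^ (n - k - i)) = (a + b) ^ (n - k)"
    by (rule binomial_ring[symmetric])
  finally show ?thesis using ab by simp
qed

lemma prod_diff_bound:
  fixes a b :: "nat \<Rightarrow> real"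
  assumes "\<And>l. l < k \<Longrightarrow> \<bar>a l\<bar> \<le> 1" "\<And>l. l < k \<Longrightarrow> \<bar>b l\<bar> \<le> 1"
  shows "\<bar>(\<Prod>l<k. a l) - (\<Prod>l<k. b l)\<bar> \<le> (\<Sum>l<k. \<bar>a l - b l\<bar>)"
  using assms
proof (induct k)
  case 0 then show ?case by simp
next
  case (Suc k)
  have pb: "\<bar>\<Prod>l<k. b l\<bar> \<le> 1"
    using Suc.prems(2) unfolding abs_prod by (intro prod_le_1) auto
  have "(\<Prod>l<Suc k. a l) - (\<Prod>l<Suc k. b l) = ((\<Prod>l<k. a l) - (\<Prod>l<k. b l)) * a k + (\<Prod>l<k. b l) * (a k - b k)"
    by (simp add: algebra_simps)
  also have "\<bar>\<dots>\<bar> \<le> \<bar>(\<Prod>l<k. a l) - (\<Prod>l<k. b l)\<bar> * \<bar>a k\<bar> + \<bar>\<Prod>l<k. b l\<bar> * \<bar>a k - b k\<bar>"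
    by (metis abs_mult abs_triangle_ineq)
  also have "\<dots> \<le> \<bar>(\<Prod>l<k. a l) - (\<Prod>l<k. b l)\<bar> * 1 + 1 * \<bar>a k - b k\<bar>"
    using Suc.prems pb by (intro add_mono mult_mono) auto
  also have "\<dots> \<le> (\<Sum>l<k. \<bar>a l - b l\<bar>) + \<bar>a k - b k\<bar>"
    using Suc by simp
  finally show ?case by simp
qed

definition delta :: "nat \<Rightarrow> nat \<Rightarrow> real" where
  "delta n k = (\<Sum>l<k. real l / (real n - real l))"

lemma delta_tendsto: "(\<lambda>n. delta n k) \<longlonglongrightarrow> 0"
  unfolding delta_def
proof (rule tendsto_null_sum)
  fix l :: nat
  show "(\<lambda>n. real l / (real n - real l)) \<longlonglongrightarrow> 0"
    by real_asymp
qed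

lemma FF_ratio_bound:
  assumes "j \<le> n" "2 * k \<le> n" "0 < n"
  shows "\<bar>(real j / real n) ^ k - FF j k / FF n k\<bar> \<le> delta n k"
proof -
  have A: "FF j k / FF n k = (\<Prod>l<k. (real j - real l) / (real n - real l))"
    unfolding FF_def by (rule prod_dividef[symmetric])
  have B: "(real j / real n) ^ k = (\<Prod>l<k. real j / real n)" by simp
  have C: "\<bar>(\<Prod>l<k. real j / real n) - (\<Prod>l<k. (real j - real l) / (real n - real l))\<bar>
      \<le> (\<Sum>l<k. \<bar>real j / real n - (real j - real l) / (real n - real l)\<bar>)"
  proof (rule prod_diff_bound)
    fix l assume l: "l < k"
    have jn: "real j \<le> real n" "0 < real n" using assms by auto
    then show "\<bar>real j / real n\<bar> \<le> 1"
      by (auto simp: abs_le_iff le_divide_eq divide_le_eq)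
    have l2: "2 * l < n" using assms l by linarith
    then have "real (2 * l) < real n" by (simp only: of_nat_less_iff)
    then have nl: "real n - real l > 0" "real l \<le> real n - real l" by simp_all
    have "- (real n - real l) \<le> real j - real l" "real j - real l \<le> real n - real l"
      using jn nl by linarith+
    then show "\<bar>(real j - real l) / (real n - real l)\<bar> \<le> 1"
      using nl by (auto simp: abs_le_iff le_divide_eq divide_le_eq)
  qed
  have D: "(\<Sum>l<k. \<bar>real j / real n - (real j - real l) / (real n - real l)\<bar>) \<le> delta n k"
    unfolding delta_def
  proof (rule sum_mono)
    fix l assume "l \<in> {..<k}"
    then have nl: "real n - real l > 0" "real l \<le> real n" "real n > 0" "real j \<le> real n"
      using assms by auto
    have eq: "real j / real n - (real j - real l) / (real n - real l)
        = (real l / (real n - real l)) * ((real n - real j) / real n)"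
      using nl by (simp add: field_simps)
    have "(real l / (real n - real l)) * ((real n - real j) / real n) \<le> real l / (real n - real l)"
      using nl by (intro mult_left_le) auto
    moreover have "0 \<le> (real l / (real n - real l)) * ((real n - real j) / real n)"
      using nl by auto
    ultimately show "\<bar>real j / real n - (real j - real l) / (real n - real l)\<bar> \<le> real l / (real n - real l)"
      unfolding eq by linarith
  qed
  have "\<bar>(real j / real n) ^ k - FF j k / FF n k\<bar>
     = \<bar>(\<Prod>l<k. real j / real n) - (\<Prod>l<k. (real j - real l) / (real n - real l))\<bar>"
    by (simp only: A B)
  also note C
  also note D
  finally show ?thesis .
qed


definition Yp :: "real \<Rightarrow> real poly" where "Yp \<beta> = [:1/2, 1/(2*\<beta>):]"
definition Zp :: "real \<Rightarrow> real poly" where "Zp \<beta> = [:1/2, -1/(2*\<beta>):]"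

lemma YZ_sum: "Yp \<beta> + Zp \<beta> = 1"
  by (simp add: Yp_def Zp_def one_pCons)

lemma const_poly_power: "[:c:] ^ n = [:c ^ n:]"
  by (induct n) (auto simp: one_pCons mult.commute)

locale hmom =
  fixes L :: "real poly \<Rightarrow> real" and \<beta> :: real
  assumes bpos: "0 < \<beta>"
    and L_add: "\<And>p q. L (p + q) = L p + L q"
    and L_smult: "\<And>c p. L (smult c p) = c * L p"
    and L_one: "L 1 = 1"
    and L_pos: "\<And>j r. 0 \<le> L (Yp \<beta> ^ j * Zp \<beta> ^ r)"
begin

lemma L_0: "L 0 = 0"
  using L_smult[of 0 0] by simp

lemma L_sum: "L (\<Sum>i\<in>I. f i) = (\<Sum>i\<in>I. L (f i))"
  by (induct I rule: infinite_finite_induct) (auto simp: L_0 L_add)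

definition w :: "nat \<Rightarrow> nat \<Rightarrow> real" where
  "w n j = real (n choose j) * L (Yp \<beta> ^ j * Zp \<beta> ^ (n - j))"

lemma w_nonneg: "0 \<le> w n j"
  unfolding w_def using L_pos by simp

lemma w_FF: "(\<Sum>j\<le>n. w n j * FF j k) = FF n k * L (Yp \<beta> ^ k)"
proof -
  have "L (\<Sum>j\<le>n. smult (real (n choose j) * FF j k) (Yp \<beta> ^ j * Zp \<beta> ^ (n - j)))
      = L (smult (FF n k) (Yp \<beta> ^ k))"
    by (simp only: bern_identity[OF YZ_sum])
  then show ?thesis
    by (simp add: L_sum L_smult w_def mult_ac)
qed

lemma w_sum: "(\<Sum>j\<le>n. w n j) = 1"
  using w_FF[of n 0] by (simp add: L_one)

lemma FF_pos: "k \<le> n \<Longrightarrow> 0 < FF n k"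
  unfolding FF_def by (intro prod_pos) auto

lemma S_lim: "(\<lambda>n. \<Sum>j\<le>n. w n j * (real j / real n) ^ k) \<longlonglongrightarrow> L (Yp \<beta> ^ k)"
proof -
  have ev: "\<forall>\<^sub>F n in sequentially. norm ((\<Sum>j\<le>n. w n j * (real j / real n) ^ k) - L (Yp \<beta> ^ k)) \<le> delta n k"
    using eventually_ge_at_top[of "Suc (2 * k)"]
  proof eventually_elim
    case (elim n)
    then have n: "0 < n" "2 * k \<le> n" "k \<le> n" by auto
    have "L (Yp \<beta> ^ k) = (\<Sum>j\<le>n. w n j * (FF j k / FF n k))"
      using w_FF[of n k] FF_pos[OF n(3)]
      by (simp add: sum_divide_distrib[symmetric] field_simps)
    then have "(\<Sum>j\<le>n. w n j * (real j / real n) ^ k) - L (Yp \<beta> ^ k)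
        = (\<Sum>j\<le>n. w n j * ((real j / real n) ^ k - FF j k / FF n k))"
      by (simp add: sum_subtractf[symmetric] algebra_simps)
    also have "\<bar>\<dots>\<bar> \<le> (\<Sum>j\<le>n. w n j * delta n k)"
      by (rule order_trans[OF sum_abs sum_mono])
         (use w_nonneg FF_ratio_bound n in \<open>auto simp: abs_mult intro!: mult_left_mono\<close>)
    also have "\<dots> = delta n k"
      by (simp add: sum_distrib_right[symmetric] w_sum)
    finally show ?case by simp
  qed
  have "(\<lambda>n. (\<Sum>j\<le>n. w n j * (real j / real n) ^ k) - L (Yp \<beta> ^ k)) \<longlonglongrightarrow> 0"
    by (rule Lim_null_comparison[OF ev delta_tendsto])
  then show ?thesis by (simp add: LIM_zero_iff)
qed

definition xpt :: "nat \<Rightarrow> nat \<Rightarrow> real" where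
  "xpt n j = 2 * \<beta> * (real j / real n) - \<beta>"

lemma poly_binom_Yp:
  "(\<Sum>i\<le>k. smult (real (k choose i) * (2 * \<beta>) ^ i * (- \<beta>) ^ (k - i)) (Yp \<beta> ^ i)) = monom 1 k"
proof -
  have X: "smult (2 * \<beta>) (Yp \<beta>) + [:- \<beta>:] = [:0, 1:]"
    using bpos by (simp add: Yp_def)
  have "monom (1::real) k = (smult (2 * \<beta>) (Yp \<beta>) + [:- \<beta>:]) ^ k"
    by (simp add: X monom_altdef)
  also have "\<dots> = (\<Sum>i\<le>k. of_nat (k choose i) * (smult (2 * \<beta>) (Yp \<beta>)) ^ i * [:- \<beta>:] ^ (k - i))"
    by (rule binomial_ring)
  also have "\<dots> = (\<Sum>i\<le>k. smult (real (k choose i) * (2 * \<beta>) ^ i * (- \<beta>) ^ (k - i)) (Yp \<beta> ^ i))"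
    by (intro sum.cong refl) (simp add: smult_power const_poly_power of_nat_poly mult_ac)
  finally show ?thesis by simp
qed

lemma T_lim: "(\<lambda>n. \<Sum>j\<le>n. w n j * (xpt n j) ^ k) \<longlonglongrightarrow> L (monom 1 k)"
proof -
  define c where "c i = real (k choose i) * (2 * \<beta>) ^ i * (- \<beta>) ^ (k - i)" for i
  have eq: "(\<Sum>j\<le>n. w n j * (xpt n j) ^ k) = (\<Sum>i\<le>k. c i * (\<Sum>j\<le>n. w n j * (real j / real n) ^ i))" for n
  proof -
    have "(xpt n j) ^ k = (\<Sum>i\<le>k. c i * (real j / real n) ^ i)" for j
    proof -
      define y where "y = real j / real n"
      have "(xpt n j) ^ k = (2 * \<beta> * y + (- \<beta>)) ^ k" by (simp add: xpt_def y_def)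
      also have "\<dots> = (\<Sum>i\<le>k. of_nat (k choose i) * (2 * \<beta> * y) ^ i * (- \<beta>) ^ (k - i))"
        by (rule binomial_ring)
      also have "\<dots> = (\<Sum>i\<le>k. c i * y ^ i)"
        by (intro sum.cong refl) (simp add: c_def power_mult_distrib mult_ac)
      finally show ?thesis by (simp add: y_def)
    qed
    then show ?thesis
      by (simp add: sum_distrib_left sum_distrib_right mult_ac sum.swap[of _ "{..k}"])
  qed
  have "(\<lambda>n. \<Sum>i\<le>k. c i * (\<Sum>j\<le>n. w n j * (real j / real n) ^ i)) \<longlonglongrightarrow> (\<Sum>i\<le>k. c i * L (Yp \<beta> ^ i))"
    by (intro tendsto_sum tendsto_mult_left S_lim)
  also have "(\<Sum>i\<le>k. c i * L (Yp \<beta> ^ i)) = L (\<Sum>i\<le>k. smult (c i) (Yp \<beta> ^ i))"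
    by (simp add: L_sum L_smult)
  also have "\<dots> = L (monom 1 k)"
    by (simp only: c_def poly_binom_Yp)
  finally show ?thesis by (simp add: eq)
qed

lemma xpt_bound: "j \<le> n \<Longrightarrow> xpt n j \<in> {-\<beta>..\<beta>}"
proof -
  assume "j \<le> n"
  then have "0 \<le> real j / real n" "real j / real n \<le> 1"
    by (auto simp: divide_le_eq_1)
  moreover have "2 * \<beta> * (real j / real n) \<le> 2 * \<beta>"
    using mult_left_mono[of "real j / real n" 1 "2 * \<beta>"] bpos \<open>real j / real n \<le> 1\<close> by simp
  moreover have "0 \<le> 2 * \<beta> * (real j / real n)"
    using bpos \<open>0 \<le> real j / real n\<close> by simp
  ultimately show ?thesis unfolding xpt_def by auto
qed

end

context hmom
begin

theorem exists_measure:
  "\<exists>M. real_distribution M \<and> (AE x in M. x \<in> {-\<beta>..\<beta>}) \<and>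
     (\<forall>k. integrable M (\<lambda>x. x ^ k) \<and> (\<integral>x. x ^ k \<partial>M) = L (monom 1 k))"
proof -
  define f where "f n j = (if j \<le> n then w n j else 0)" for n j
  have f_nonneg: "0 \<le> f n j" for n j by (simp add: f_def w_nonneg)
  have f_prob: "(\<integral>\<^sup>+x. ennreal (f n x) \<partial>count_space UNIV) = 1" for n
  proof -
    have "(\<integral>\<^sup>+x. ennreal (f n x) \<partial>count_space UNIV) = (\<Sum>x\<in>{..n}. ennreal (f n x))"
      by (rule nn_integral_count_space') (auto simp: f_def)
    also have "\<dots> = ennreal (\<Sum>x\<in>{..n}. f n x)"
      using f_nonneg by simp
    also have "(\<Sum>x\<in>{..n}. f n x) = 1"
      using w_sum[of n] by (simp add: f_def)
    finally show ?thesis by simp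
  qed
  define P where "P n = embed_pmf (f n)" for n
  have pmfP: "pmf (P n) j = f n j" for n j
    unfolding P_def using f_nonneg f_prob by (rule pmf_embed_pmf)
  define \<mu> where "\<mu> n = distr (measure_pmf (P n)) borel (xpt n)" for n
  have rd: "real_distribution (\<mu> n)" for n
    unfolding \<mu>_def real_distribution_def real_distribution_axioms_def
    by (auto intro!: prob_space.prob_space_distr prob_space_measure_pmf)
  have int: "integral\<^sup>L (\<mu> n) g = (\<Sum>j\<le>n. w n j * g (xpt n j))"
    if g: "g \<in> borel_measurable borel" for n and g :: "real \<Rightarrow> real"
  proof -
    have "integral\<^sup>L (\<mu> n) g = (\<integral>j. g (xpt n j) \<partial>measure_pmf (P n))"
      unfolding \<mu>_def by (rule integral_distr) (use g in auto)
    also have "\<dots> = (\<Sum>j\<in>{..n}. g (xpt n j) * pmf (P n) j)"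
      by (rule integral_measure_pmf_real)
         (auto simp: set_pmf_eq pmfP f_def split: if_splits)
    also have "\<dots> = (\<Sum>j\<le>n. w n j * g (xpt n j))"
      by (simp add: pmfP f_def mult.commute)
    finally show ?thesis .
  qed
  have ae: "AE x in \<mu> n. x \<in> {-\<beta>..\<beta>}" for n
  proof -
    have "AE j in measure_pmf (P n). xpt n j \<in> {-\<beta>..\<beta>}"
      using xpt_bound[of _ n] by (auto simp: AE_measure_pmf_iff set_pmf_eq pmfP f_def split: if_splits)
    then show ?thesis unfolding \<mu>_def by (subst AE_distr_iff) auto
  qed
  have tight: "tight \<mu>"
    unfolding tight_def
  proof (intro conjI allI impI)
    fix n show "real_distribution (\<mu> n)" by (rule rd)
  next
    fix \<epsilon> :: real assume "0 < \<epsilon>"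
    have "measure (\<mu> n) {-\<beta>-1<..\<beta>+1} = 1" for n
    proof -
      interpret real_distribution "\<mu> n" by (rule rd)
      have "AE x in \<mu> n. x \<in> {-\<beta>-1<..\<beta>+1}"
        using ae[of n] by eventually_elim auto
      then show ?thesis by (subst prob_eq_1) auto
    qed
    then show "\<exists>a b. a < b \<and> (\<forall>n. 1 - \<epsilon> < measure (\<mu> n) {a<..b})"
      using \<open>0 < \<epsilon>\<close> bpos by (intro exI[of _ "-\<beta>-1"] exI[of _ "\<beta>+1"]) auto
  qed
  obtain r M where r: "strict_mono (r :: nat \<Rightarrow> nat)" and M: "real_distribution M"
    and wc: "weak_conv_m (\<mu> \<circ> id \<circ> r) M"
    using tight_imp_convergent_subsubsequence[OF tight, of id] by (auto simp: strict_mono_def)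
  interpret M: real_distribution M by (rule M)
  have conv: "(\<lambda>n. integral\<^sup>L (\<mu> (r n)) g) \<longlonglongrightarrow> integral\<^sup>L M g"
    if "\<And>x. isCont g x" "\<And>x. \<bar>g x\<bar> \<le> B" for g :: "real \<Rightarrow> real" and B
  proof -
    have "(\<lambda>n. integral\<^sup>L ((\<mu> \<circ> id \<circ> r) n) g) \<longlonglongrightarrow> integral\<^sup>L M g"
      by (rule weak_conv_imp_integral_bdd_continuous_conv[OF _ M wc, of g B])
         (use rd that in auto)
    then show ?thesis by simp
  qed
  have cont_meas: "g \<in> borel_measurable borel" if "\<And>x. isCont g x" for g :: "real \<Rightarrow> real"
    using that by (intro borel_measurable_continuous_onI continuous_at_imp_continuous_on) auto
  define gs where "gs x = min 1 (max 0 (\<bar>x\<bar> - \<beta>))" for x :: real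
  have gs_cont: "isCont gs x" for x unfolding gs_def by (intro continuous_intros)
  have gs_bd: "\<bar>gs x\<bar> \<le> 1" for x unfolding gs_def by auto
  have c1: "(\<lambda>n. integral\<^sup>L (\<mu> (r n)) gs) \<longlonglongrightarrow> integral\<^sup>L M gs"
    by (rule conv[OF gs_cont gs_bd])
  have z0: "integral\<^sup>L (\<mu> n) gs = 0" for n
  proof -
    have z: "gs (xpt n j) = 0" if "j \<le> n" for j
    proof -
      have "\<bar>xpt n j\<bar> \<le> \<beta>" using xpt_bound[OF that] by auto
      then show ?thesis by (simp add: gs_def)
    qed
    show ?thesis by (subst int) (auto intro!: sum.neutral cont_meas gs_cont simp: z)
  qed
  have "(\<lambda>n. integral\<^sup>L (\<mu> (r n)) gs) = (\<lambda>n. 0)" by (simp add: z0)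
  with c1 have i0: "integral\<^sup>L M gs = 0"
    using LIMSEQ_unique[OF _ tendsto_const] by metis
  have gs_int: "integrable M gs"
    by (rule M.integrable_const_bound[where B=1]) (use gs_bd cont_meas gs_cont in auto)
  have gs_nn: "AE x in M. 0 \<le> gs x" by (rule AE_I2) (simp add: gs_def)
  have ae0: "AE x in M. gs x = 0"
    using integral_nonneg_eq_0_iff_AE[OF gs_int gs_nn] i0 by simp
  have hz: "\<bar>x\<bar> \<le> \<beta>" if "gs x = 0" for x
  proof (rule ccontr)
    assume "\<not> \<bar>x\<bar> \<le> \<beta>"
    then have "0 < gs x" unfolding gs_def by simp
    with that show False by simp
  qed
  have supp: "AE x in M. x \<in> {-\<beta>..\<beta>}"
    using ae0
  proof (rule AE_mp)
    show "AE x in M. gs x = 0 \<longrightarrow> x \<in> {-\<beta>..\<beta>}"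
    proof (rule AE_I2, rule impI)
      fix x assume "gs x = 0"
      from hz[OF this] show "x \<in> {-\<beta>..\<beta>}" by (simp add: abs_le_iff)
    qed
  qed
  have mom: "integrable M (\<lambda>x. x ^ k) \<and> (\<integral>x. x ^ k \<partial>M) = L (monom 1 k)" for k
  proof -
    define g where "g x = (max (-\<beta>) (min \<beta> x)) ^ k" for x :: real
    have clip: "g x = x ^ k" if "x \<in> {-\<beta>..\<beta>}" for x
    proof -
      have "max (-\<beta>) (min \<beta> x) = x" using that by auto
      then show ?thesis by (simp add: g_def)
    qed
    have g_cont: "isCont g x" for x unfolding g_def by (intro continuous_intros)
    have g_bd: "\<bar>g x\<bar> \<le> \<beta> ^ k" for x
    proof -
      have "\<bar>max (-\<beta>) (min \<beta> x)\<bar> \<le> \<beta>" using bpos by auto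
      then have "\<bar>max (-\<beta>) (min \<beta> x)\<bar> ^ k \<le> \<beta> ^ k" by (rule power_mono) simp
      then show ?thesis by (simp add: g_def power_abs)
    qed
    have A: "(\<lambda>n. integral\<^sup>L (\<mu> (r n)) g) \<longlonglongrightarrow> integral\<^sup>L M g"
      by (rule conv[OF g_cont g_bd])
    have B: "integral\<^sup>L (\<mu> n) g = (\<Sum>j\<le>n. w n j * (xpt n j) ^ k)" for n
    proof -
      have "integral\<^sup>L (\<mu> n) g = (\<Sum>j\<le>n. w n j * g (xpt n j))"
        by (rule int) (rule cont_meas[OF g_cont])
      also have "\<dots> = (\<Sum>j\<le>n. w n j * (xpt n j) ^ k)"
        using xpt_bound by (intro sum.cong refl) (simp add: clip)
      finally show ?thesis .
    qed
    have C: "(\<lambda>n. \<Sum>j\<le>r n. w (r n) j * (xpt (r n) j) ^ k) \<longlonglongrightarrow> L (monom 1 k)"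
      using LIMSEQ_subseq_LIMSEQ[OF T_lim r] unfolding comp_def .
    from A have "(\<lambda>n. \<Sum>j\<le>r n. w (r n) j * (xpt (r n) j) ^ k) \<longlonglongrightarrow> integral\<^sup>L M g"
      by (simp only: B)
    from LIMSEQ_unique[OF this C] have gM: "integral\<^sup>L M g = L (monom 1 k)" .
    have aeg: "AE x in M. g x = x ^ k"
      using supp by eventually_elim (rule clip)
    have gi: "integrable M g"
      by (rule M.integrable_const_bound[where B="\<beta> ^ k"]) (use g_bd cont_meas g_cont in auto)
    have "integrable M (\<lambda>x. x ^ k)"
      by (rule integrable_cong_AE_imp[OF gi]) (use aeg in auto)
    moreover have "(\<integral>x. x ^ k \<partial>M) = integral\<^sup>L M g"
    proof (rule integral_cong_AE)
      show "AE x in M. x ^ k = g x" using aeg by eventually_elim simp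
      show "g \<in> borel_measurable M" using cont_meas[OF g_cont] by simp
    qed simp
    ultimately show ?thesis using gM by simp
  qed
  show ?thesis using M supp mom by blast
qed

end

lemma moments_support:
  fixes M :: "real measure" and \<beta> :: real
  assumes P: "prob_space M" and S: "sets M = sets borel" and b: "0 \<le> \<beta>"
    and I: "\<And>k. integrable M (\<lambda>x. x ^ k)"
    and B: "\<And>k. (\<integral>x. x ^ (2 * k) \<partial>M) \<le> \<beta> ^ (2 * k)"
  shows "AE x in M. x \<in> {-\<beta>..\<beta>}"
proof -
  interpret prob_space M by (rule P)
  have null: "AE x in M. \<bar>x\<bar> < r" if r: "\<beta> < r" for r
  proof -
    have r0: "0 < r" using b r by simp
    define q where "q = \<beta> / r"
    have q: "0 \<le> q" "q < 1" using b r r0 by (auto simp: q_def)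
    have bnd: "measure M {x\<in>space M. r \<le> \<bar>x\<bar>} \<le> q ^ k" for k
    proof -
      have "measure M {x\<in>space M. r \<le> \<bar>x\<bar>} = measure M {x\<in>space M. r ^ (2 * Suc k) \<le> x ^ (2 * Suc k)}"
      proof -
        have "r \<le> \<bar>x\<bar> \<longleftrightarrow> r ^ (2 * Suc k) \<le> x ^ (2 * Suc k)" for x
        proof -
          have "x ^ (2 * Suc k) = \<bar>x\<bar> ^ (2 * Suc k)"
            by (simp add: power_even_abs)
          moreover have "(r ^ (2 * Suc k) \<le> \<bar>x\<bar> ^ (2 * Suc k)) = (r \<le> \<bar>x\<bar>)"
            by (rule power_mono_iff) (use r0 in auto)
          ultimately show ?thesis by metis
        qed
        then show ?thesis by simp
      qed
      also have "\<dots> \<le> (\<integral>x. x ^ (2 * Suc k) \<partial>M) / r ^ (2 * Suc k)"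
      proof (rule integral_Markov_inequality_measure[OF I])
        have ev: "0 \<le> y ^ (2 * Suc k)" for y :: real by (rule zero_le_even_power) simp
        show "AE x in M. 0 \<le> x ^ (2 * Suc k)" by (rule AE_I2) (rule ev)
        show "0 < r ^ (2 * Suc k)" using r0 by simp
      qed (auto simp: S)
      also have "\<dots> \<le> \<beta> ^ (2 * Suc k) / r ^ (2 * Suc k)"
      proof -
        have "0 \<le> r ^ (2 * Suc k)" using r0 by (intro zero_le_power) simp
        from divide_right_mono[OF B[of "Suc k"] this] show ?thesis .
      qed
      also have "\<dots> = q ^ (2 * Suc k)" by (simp add: q_def power_divide)
      also have "\<dots> \<le> q ^ k"
        using q by (intro power_decreasing) auto
      finally show ?thesis .
    qed
    have "measure M {x\<in>space M. r \<le> \<bar>x\<bar>} \<le> 0"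
      using LIMSEQ_le_const[OF LIMSEQ_power_zero[of q]] q bnd by auto
    then have "measure M {x\<in>space M. r \<le> \<bar>x\<bar>} = 0" by (simp add: measure_nonneg antisym)
    moreover have sp: "space M = UNIV" using sets_eq_imp_space_eq[OF S] by simp
    moreover have "{x\<in>space M. r \<le> \<bar>x\<bar>} \<in> sets M"
      unfolding S sp by (auto intro!: borel_closed closed_Collect_le continuous_intros)
    ultimately have "AE x in M. x \<notin> {x\<in>space M. r \<le> \<bar>x\<bar>}"
      using prob_eq_0 by blast
    then show ?thesis by eventually_elim (simp add: sp not_le)
  qed
  have "AE x in M. \<forall>m::nat. \<bar>x\<bar> < \<beta> + inverse (real (Suc m))"
    by (subst AE_all_countable) (auto intro!: null)
  then show ?thesis
  proof (rule AE_mp, intro AE_I2 impI)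
    fix x assume H: "\<forall>m::nat. \<bar>x\<bar> < \<beta> + inverse (real (Suc m))"
    have "\<bar>x\<bar> \<le> \<beta>"
    proof (rule ccontr)
      assume "\<not> \<bar>x\<bar> \<le> \<beta>"
      then obtain m where "inverse (real (Suc m)) < \<bar>x\<bar> - \<beta>"
        using reals_Archimedean[of "\<bar>x\<bar> - \<beta>"] by auto
      with H[rule_format, of m] show False by simp
    qed
    then show "x \<in> {-\<beta>..\<beta>}" by (simp add: abs_le_iff)
  qed
qed

lemma moment_unique:
  fixes M1 M2 :: "real measure" and R :: real
  assumes M1: "real_distribution M1" and M2: "real_distribution M2"
    and S1: "AE x in M1. x \<in> {-R..R}" and S2: "AE x in M2. x \<in> {-R..R}"
    and I1: "\<And>k. integrable M1 (\<lambda>x. x ^ k)" and I2: "\<And>k. integrable M2 (\<lambda>x. x ^ k)"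
    and E: "\<And>k. (\<integral>x. x ^ k \<partial>M1) = (\<integral>x. x ^ k \<partial>M2)"
  shows "M1 = M2"
proof -
  interpret M1: real_distribution M1 by (rule M1)
  interpret M2: real_distribution M2 by (rule M2)
  have cont_meas: "f \<in> borel_measurable borel" if "\<And>x. isCont f x" for f :: "real \<Rightarrow> real"
    using that by (intro borel_measurable_continuous_onI continuous_at_imp_continuous_on) auto
  have approx: "\<bar>integral\<^sup>L M f - (\<Sum>i\<le>n. a i * integral\<^sup>L M (\<lambda>x. x ^ i))\<bar> \<le> e"
    if M: "real_distribution M" and SM: "AE x in M. x \<in> {-R..R}" and IM: "\<And>k. integrable M (\<lambda>x. x ^ k)"
      and fc: "\<And>x. isCont f x" and fb: "\<And>x. \<bar>f x\<bar> \<le> B"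
      and g: "\<And>x. x \<in> {-R..R} \<Longrightarrow> \<bar>f x - (\<Sum>i\<le>n. a i * x ^ i)\<bar> < e"
    for M f B n a e
  proof -
    interpret real_distribution M by (rule M)
    have fi: "integrable M f"
      by (rule integrable_const_bound[where B=B]) (use fb cont_meas[OF fc] in auto)
    have gi: "integrable M (\<lambda>x. \<Sum>i\<le>n. a i * x ^ i)"
      using IM by auto
    have "(\<Sum>i\<le>n. a i * integral\<^sup>L M (\<lambda>x. x ^ i)) = (\<integral>x. (\<Sum>i\<le>n. a i * x ^ i) \<partial>M)"
      using IM by (simp add: integral_sum)
    then have "integral\<^sup>L M f - (\<Sum>i\<le>n. a i * integral\<^sup>L M (\<lambda>x. x ^ i))
        = (\<integral>x. f x - (\<Sum>i\<le>n. a i * x ^ i) \<partial>M)"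
      using fi gi by simp
    also have "\<bar>\<dots>\<bar> \<le> (\<integral>x. \<bar>f x - (\<Sum>i\<le>n. a i * x ^ i)\<bar> \<partial>M)"
      by (rule integral_abs_bound)
    also have "\<dots> \<le> (\<integral>x. e \<partial>M)"
    proof (rule integral_mono_AE)
      show "AE x in M. \<bar>f x - (\<Sum>i\<le>n. a i * x ^ i)\<bar> \<le> e"
        using SM by eventually_elim (use g in \<open>auto intro: less_imp_le\<close>)
    qed (use fi gi in auto)
    also have "\<dots> = e" using prob_space by simp
    finally show ?thesis .
  qed
  have int_eq: "integral\<^sup>L M1 f = integral\<^sup>L M2 f"
    if fc: "\<And>x. isCont f x" and fb: "\<And>x. \<bar>f x\<bar> \<le> 1" for f :: "real \<Rightarrow> real"
  proof -
    have main: "\<bar>integral\<^sup>L M1 f - integral\<^sup>L M2 f\<bar> \<le> 2 * e" if e: "0 < e" for e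
    proof -
      obtain g where g: "real_polynomial_function g" and ge: "\<And>x. x \<in> {-R..R} \<Longrightarrow> \<bar>f x - g x\<bar> < e"
        using Stone_Weierstrass_real_polynomial_function[of "{-R..R}" f e] fc e
        by (auto intro: continuous_at_imp_continuous_on)
      obtain a n where gdef: "g = (\<lambda>x. \<Sum>i\<le>n. a i * x ^ i)"
        using g real_polynomial_function_iff_sum by blast
      have a1: "\<bar>integral\<^sup>L M1 f - (\<Sum>i\<le>n. a i * integral\<^sup>L M1 (\<lambda>x. x ^ i))\<bar> \<le> e"
        by (rule approx[OF M1 S1 I1 fc fb]) (use ge gdef in auto)
      have a2: "\<bar>integral\<^sup>L M2 f - (\<Sum>i\<le>n. a i * integral\<^sup>L M2 (\<lambda>x. x ^ i))\<bar> \<le> e"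
        by (rule approx[OF M2 S2 I2 fc fb]) (use ge gdef in auto)
      show ?thesis using a1 a2 E by simp
    qed
    have "\<bar>integral\<^sup>L M1 f - integral\<^sup>L M2 f\<bar> \<le> 0"
    proof (rule field_le_epsilon)
      fix e :: real assume "0 < e"
      then show "\<bar>integral\<^sup>L M1 f - integral\<^sup>L M2 f\<bar> \<le> 0 + e" using main[of "e/2"] by simp
    qed
    then show ?thesis by simp
  qed
  have wc: "weak_conv_m (\<lambda>n. M1) M2"
    by (rule integral_bdd_continuous_conv_imp_weak_conv) (use M1 M2 int_eq in auto)
  have ceq: "cdf M1 x = cdf M2 x" if "measure M2 {x} = 0" for x
  proof -
    have "isCont (cdf M2) x" using that by (simp add: M2.isCont_cdf)
    then have "(\<lambda>n. cdf M1 x) \<longlonglongrightarrow> cdf M2 x"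
      using wc by (auto simp: weak_conv_m_def weak_conv_def)
    then show ?thesis by (simp add: LIMSEQ_const_iff)
  qed
  have count: "countable {x. measure M2 {x} \<noteq> 0}"
    by (rule M2.countable_support)
  have "cdf M1 = cdf M2"
  proof (rule ext)
    fix x
    let ?D = "\<lambda>x. \<bar>cdf M1 x - cdf M2 x\<bar>"
    have "?D x \<le> \<epsilon>" if "\<epsilon> > 0" for \<epsilon> :: real
    proof -
      have "(?D \<longlongrightarrow> ?D x) (at_right x)"
        using M1.cdf_is_right_cont [of x] M2.cdf_is_right_cont [of x]
        by (intro tendsto_intros) (auto simp add: continuous_within)
      then have "eventually (\<lambda>y. \<bar>?D y - ?D x\<bar> < \<epsilon>) (at_right x)"
        using \<open>\<epsilon> > 0\<close> by (simp only: tendsto_iff dist_real_def eventually_conj eventually_at_right_less)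
      then obtain N where "N > x" "\<And>y. x < y \<Longrightarrow> y < N \<Longrightarrow> \<bar>?D y - ?D x\<bar> < \<epsilon>"
        by (auto simp add: eventually_at_right[OF less_add_one])
      with open_minus_countable[OF count, of "{x <..< N}"] obtain b where "x < b" "b < N"
          "measure M2 {b} = 0" and 2: "\<bar>?D b - ?D x\<bar> < \<epsilon>"
        by auto
      then have "?D b = 0" using ceq by simp
      with 2 show ?thesis by simp
    qed
    then show "cdf M1 x = cdf M2 x"
      by (metis abs_le_zero_iff dense_ge eq_iff_diff_eq_0)
  qed
  then show ?thesis
    by (rule cdf_unique [OF M1 M2])
qed


lemma pow_split: "(x::'a::comm_monoid_mult) ^ j = x ^ (j mod 2) * x ^ (j div 2) * x ^ (j div 2)"
proof -
  have e: "j = j mod 2 + j div 2 + j div 2" by arith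
  have "x ^ j = x ^ (j mod 2 + j div 2 + j div 2)" using e by (rule arg_cong)
  then show ?thesis by (simp only: power_add)
qed

context lfg
begin

lemma ip_A_bound:
  assumes "finite (supp \<psi>)"
  shows "\<bar>ip (Aop \<psi>) \<psi>\<bar> \<le> real \<Delta> * ip \<psi> \<psi>"
proof -
  have "\<bar>ip (Aop \<psi>) \<psi>\<bar> \<le> sqrt (ip (Aop \<psi>) (Aop \<psi>)) * sqrt (ip \<psi> \<psi>)"
    by (rule ip_CS_abs) (use assms fsupp_Aop in auto)
  also have "sqrt (ip (Aop \<psi>) (Aop \<psi>)) \<le> sqrt ((real \<Delta>)\<^sup>2 * ip \<psi> \<psi>)"
    using Aop_norm[OF assms] by simp
  also have "sqrt ((real \<Delta>)\<^sup>2 * ip \<psi> \<psi>) = real \<Delta> * sqrt (ip \<psi> \<psi>)"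
    by (simp add: real_sqrt_mult)
  also have "real \<Delta> * sqrt (ip \<psi> \<psi>) * sqrt (ip \<psi> \<psi>) = real \<Delta> * ip \<psi> \<psi>"
    using ip_nonneg[of \<psi>] by (simp add: mult.assoc)
  finally show ?thesis by (simp add: mult_right_mono ip_nonneg)
qed

lemma ip_pop_nonneg:
  assumes fs: "finite (supp \<psi>)" and D0: "0 < \<Delta>" and t: "t \<in> {1, Yp (real \<Delta>), Zp (real \<Delta>), Yp (real \<Delta>) * Zp (real \<Delta>)}"
  shows "0 \<le> ip (pop t \<psi>) \<psi>"
proof -
  define \<beta> where "\<beta> = real \<Delta>"
  have b0: "0 < \<beta>" using D0 by (simp add: \<beta>_def)
  have AB: "\<bar>ip (Aop \<psi>) \<psi>\<bar> \<le> \<beta> * ip \<psi> \<psi>" using ip_A_bound[OF fs] by (simp add: \<beta>_def)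
  have AA: "ip (Aop \<psi>) (Aop \<psi>) \<le> \<beta>\<^sup>2 * ip \<psi> \<psi>" using Aop_norm[OF fs] by (simp add: \<beta>_def)
  have nn: "0 \<le> ip \<psi> \<psi>" by (rule ip_nonneg)
  have fA: "finite (supp (Aop \<psi>))" using fs fsupp_Aop by blast
  have lin: "ip (pop [:a, c:] \<psi>) \<psi> = a * ip \<psi> \<psi> + c * ip (Aop \<psi>) \<psi>" for a c
  proof -
    have "pop [:a, c:] \<psi> = (\<lambda>x. a * \<psi> x + Aop (\<lambda>x. c * \<psi> x) x)" by simp
    also have "\<dots> = (\<lambda>x. a * \<psi> x + c * Aop \<psi> x)" by (simp add: Aop_scale)
    finally show ?thesis
      using fs fA by (simp add: ip_add_left fsupp_scale ip_scale_left)
  qed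
  consider "t = 1" | "t = Yp \<beta>" | "t = Zp \<beta>" | "t = Yp \<beta> * Zp \<beta>" using t by (auto simp: \<beta>_def)
  then show ?thesis
  proof cases
    case 1 then show ?thesis by (simp add: ip_nonneg)
  next
    case 2
    have "ip (pop t \<psi>) \<psi> = 1/2 * ip \<psi> \<psi> + 1/(2*\<beta>) * ip (Aop \<psi>) \<psi>"
      unfolding 2 Yp_def lin ..
    moreover have "- (1/(2*\<beta>) * ip (Aop \<psi>) \<psi>) \<le> 1/2 * ip \<psi> \<psi>"
    proof -
      have "- ip (Aop \<psi>) \<psi> \<le> \<beta> * ip \<psi> \<psi>" using AB by linarith
      then have "1/(2*\<beta>) * (- ip (Aop \<psi>) \<psi>) \<le> 1/(2*\<beta>) * (\<beta> * ip \<psi> \<psi>)"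
        using b0 by (intro mult_left_mono) auto
      then show ?thesis using b0 by (simp add: field_simps)
    qed
    ultimately show ?thesis by linarith
  next
    case 3
    have "ip (pop t \<psi>) \<psi> = 1/2 * ip \<psi> \<psi> + (-1/(2*\<beta>)) * ip (Aop \<psi>) \<psi>"
      unfolding 3 Zp_def lin by simp
    moreover have "1/(2*\<beta>) * ip (Aop \<psi>) \<psi> \<le> 1/2 * ip \<psi> \<psi>"
    proof -
      have "ip (Aop \<psi>) \<psi> \<le> \<beta> * ip \<psi> \<psi>" using AB by linarith
      then have "1/(2*\<beta>) * ip (Aop \<psi>) \<psi> \<le> 1/(2*\<beta>) * (\<beta> * ip \<psi> \<psi>)"
        using b0 by (intro mult_left_mono) auto
      then show ?thesis using b0 by (simp add: field_simps)
    qed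
    ultimately show ?thesis by linarith
  next
    case 4
    define c2 where "c2 = - ((1/(2*\<beta>)) * (1/(2*\<beta>)))"
    have c2: "c2 = -1/(4*\<beta>\<^sup>2)" using b0 by (simp add: c2_def power2_eq_square)
    have tt: "t = [:1/4, 0, c2:]"
      unfolding 4 Yp_def Zp_def c2_def by simp
    have "pop t \<psi> = pop (pCons (1/4) (pCons 0 [:c2:])) \<psi>" unfolding tt by simp
    also have "\<dots> = (\<lambda>x. 1/4 * \<psi> x + Aop (\<lambda>x. 0 * \<psi> x + Aop (\<lambda>x. c2 * \<psi> x + Aop (\<lambda>x. 0) x) x) x)"
      by (simp only: pop_pCons pop_0)
    also have "\<dots> = (\<lambda>x. 1/4 * \<psi> x + Aop (Aop (\<lambda>x. c2 * \<psi> x)) x)"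
      by (simp add: Aop_zero)
    also have "\<dots> = (\<lambda>x. 1/4 * \<psi> x + c2 * Aop (Aop \<psi>) x)"
      by (simp only: Aop_scale)
    also have "\<dots> = (\<lambda>x. 1/4 * \<psi> x + (-1/(4*\<beta>\<^sup>2)) * Aop (Aop \<psi>) x)"
      by (simp only: c2)
    finally have pe: "pop t \<psi> = (\<lambda>x. 1/4 * \<psi> x + (-1/(4*\<beta>\<^sup>2)) * Aop (Aop \<psi>) x)" .
    have "ip (pop t \<psi>) \<psi> = ip (\<lambda>x. 1/4 * \<psi> x) \<psi> + ip (\<lambda>x. (-1/(4*\<beta>\<^sup>2)) * Aop (Aop \<psi>) x) \<psi>"
      unfolding pe by (rule ip_add_left[OF fsupp_scale[OF fs] fsupp_scale[OF fsupp_Aop[OF fA]]])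
    also have "\<dots> = 1/4 * ip \<psi> \<psi> + (-1/(4*\<beta>\<^sup>2)) * ip (Aop (Aop \<psi>)) \<psi>"
      by (simp only: ip_scale_left)
    also have "ip (Aop (Aop \<psi>)) \<psi> = ip (Aop \<psi>) (Aop \<psi>)"
      by (rule Aop_sym) (use fA fs in auto)
    finally have eq: "ip (pop t \<psi>) \<psi> = 1/4 * ip \<psi> \<psi> - 1/(4*\<beta>\<^sup>2) * ip (Aop \<psi>) (Aop \<psi>)"
      by simp
    have "1/(4*\<beta>\<^sup>2) * ip (Aop \<psi>) (Aop \<psi>) \<le> 1/(4*\<beta>\<^sup>2) * (\<beta>\<^sup>2 * ip \<psi> \<psi>)"
      using AA b0 by (intro mult_left_mono) auto
    then have "1/(4*\<beta>\<^sup>2) * ip (Aop \<psi>) (Aop \<psi>) \<le> 1/4 * ip \<psi> \<psi>"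
      using b0 by (simp add: field_simps)
    then show ?thesis using eq by linarith
  qed
qed

lemma Lf_pos:
  assumes fs: "finite (supp e)" and D0: "0 < \<Delta>"
  shows "0 \<le> Lf e (Yp (real \<Delta>) ^ j * Zp (real \<Delta>) ^ r)"
proof -
  define Y Z where "Y = Yp (real \<Delta>)" and "Z = Zp (real \<Delta>)"
  define s where "s = Y ^ (j div 2) * Z ^ (r div 2)"
  define t where "t = Y ^ (j mod 2) * Z ^ (r mod 2)"
  have "Y ^ j * Z ^ r = (t * s) * s"
  proof -
    have "Y ^ j = Y ^ (j mod 2) * (Y ^ (j div 2)) * (Y ^ (j div 2))"
      by (rule pow_split)
    moreover have "Z ^ r = Z ^ (r mod 2) * (Z ^ (r div 2)) * (Z ^ (r div 2))"
      by (rule pow_split)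
    ultimately show ?thesis by (simp add: s_def t_def mult_ac)
  qed
  then have "Lf e (Y ^ j * Z ^ r) = ip (pop t (pop s e)) (pop s e)"
    by (simp add: Lf_mult[OF fs] pop_mult)
  moreover have "t \<in> {1, Y, Z, Y * Z}"
  proof -
    have "j mod 2 = 0 \<or> j mod 2 = 1" "r mod 2 = 0 \<or> r mod 2 = 1" by arith+
    then show ?thesis unfolding t_def by (elim disjE) simp_all
  qed
  ultimately show ?thesis
    using ip_pop_nonneg[OF fsupp_pop[OF fs] D0] by (simp add: Y_def Z_def)
qed

lemma hmom_inst:
  assumes "0 < \<Delta>"
  shows "hmom (Lf (ind b)) (real \<Delta>)"
proof
  show "0 < real \<Delta>" using assms by simp
  show "Lf (ind b) (p + q) = Lf (ind b) p + Lf (ind b) q" for p q by (simp add: Lf_add)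
  show "Lf (ind b) (smult c p) = c * Lf (ind b) p" for c p by (rule Lf_smult)
  show "Lf (ind b) 1 = 1" by (simp add: Lf_def ip_ind_right) (simp add: ind_def)
  show "0 \<le> Lf (ind b) (Yp (real \<Delta>) ^ j * Zp (real \<Delta>) ^ r)" for j r
    by (rule Lf_pos) (use assms in auto)
qed

lemma Lf_monom: "Lf (ind b) (monom 1 k) = (Aop ^^ k) (ind b) b"
proof -
  have "finite (supp ((Aop ^^ k) (ind b)))"
    using fsupp_pop[of "ind b" "monom 1 k"] by (simp add: pop_monom)
  then show ?thesis by (simp add: Lf_def pop_monom ip_ind_right)
qed

end

lemma path_tree_sym: "path_tree_adj V E u p q \<Longrightarrow> path_tree_adj V E u q p"
  unfolding path_tree_adj_def by blast

lemma path_tree_nb: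
  assumes "path_tree_adj V E u p q"
  shows "q \<in> insert (butlast p) ((\<lambda>w. p @ [w]) ` nbrs V E (last p))"
proof -
  from assms have pp: "is_path_from V E u p" and pq: "is_path_from V E u q"
    and c: "(\<exists>v. q = p @ [v]) \<or> (\<exists>v. p = q @ [v])"
    by (auto simp: path_tree_adj_def)
  have pne: "p \<noteq> []" using pp by (simp add: is_path_from_def)
  show ?thesis
  proof (cases "\<exists>v. q = p @ [v]")
    case True
    then obtain v where q: "q = p @ [v]" by blast
    have "v \<in> V" using pq q by (auto simp: is_path_from_def)
    moreover have "E (last p) v"
    proof -
      have "Suc (length p - 1) < length q" using q pne by simp
      then have "E (q ! (length p - 1)) (q ! Suc (length p - 1))"
        using pq by (simp add: is_path_from_def)
      moreover have "q ! (length p - 1) = last p" using q pne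
        by (simp add: nth_append last_conv_nth)
      moreover have "q ! Suc (length p - 1) = v" using q pne by (simp add: nth_append)
      ultimately show ?thesis by simp
    qed
    ultimately show ?thesis using q by (auto simp: nbrs_def)
  next
    case False
    then obtain v where "p = q @ [v]" using c by blast
    then show ?thesis by simp
  qed
qed

lemma path_tree_lfg:
  assumes "max_degree_le V E D"
  shows "lfg (path_tree_adj V E u) (Suc D)"
proof
  fix p q
  show "path_tree_adj V E u p q \<Longrightarrow> path_tree_adj V E u q p" by (rule path_tree_sym)
next
  fix p
  have sub: "{q. path_tree_adj V E u p q} \<subseteq> (if is_path_from V E u p then insert (butlast p) ((\<lambda>w. p @ [w]) ` nbrs V E (last p)) else {})"
  proof
    fix q assume "q \<in> {q. path_tree_adj V E u p q}"
    then have h: "path_tree_adj V E u p q" by simp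
    then have "is_path_from V E u p" by (simp add: path_tree_adj_def)
    with path_tree_nb[OF h] show "q \<in> (if is_path_from V E u p then insert (butlast p) ((\<lambda>w. p @ [w]) ` nbrs V E (last p)) else {})"
      by simp
  qed
  show "finite {q. path_tree_adj V E u p q}"
  proof (cases "is_path_from V E u p")
    case True
    then have "last p \<in> V" by (auto simp: is_path_from_def)
    then have "finite (nbrs V E (last p))" using assms by (simp add: max_degree_le_def)
    then show ?thesis using sub True by (auto intro: finite_subset)
  next
    case False then show ?thesis using sub by simp
  qed
  show "card {q. path_tree_adj V E u p q} \<le> Suc D"
  proof (cases "is_path_from V E u p")
    case True
    then have "last p \<in> V" by (auto simp: is_path_from_def)
    then have f: "finite (nbrs V E (last p))" and c: "card (nbrs V E (last p)) \<le> D"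
      using assms by (auto simp: max_degree_le_def)
    have "card {q. path_tree_adj V E u p q} \<le> card (insert (butlast p) ((\<lambda>w. p @ [w]) ` nbrs V E (last p)))"
      using sub True f by (intro card_mono) auto
    also have "\<dots> \<le> Suc (card ((\<lambda>w. p @ [w]) ` nbrs V E (last p)))"
      by (rule card_insert_le_m1) (use f in auto)
    also have "\<dots> \<le> Suc (card (nbrs V E (last p)))"
      using card_image_le[OF f] by simp
    finally show ?thesis using c by simp
  next
    case False then show ?thesis using sub by simp
  qed
qed

lemma closed_walks_Lf:
  assumes "max_degree_le V E D"
  shows "real (closed_walks_root V E u k) = lfg.Lf (path_tree_adj V E u) (ind [u]) (monom 1 k)"
proof -
  interpret T: lfg "path_tree_adj V E u" "Suc D" by (rule path_tree_lfg[OF assms])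
  have "closed_walks_root V E u k = card (T.walks k [u] [u])"
    by (simp add: closed_walks_root_def T.walks_def)
  then show ?thesis using T.walks_count[of k "[u]" "[u]"] by (simp add: T.Lf_monom)
qed

lemma matching_measure_char:
  assumes "max_degree_le V E D"
  shows "real_distribution (matching_measure V E u) \<and>
    (AE x in matching_measure V E u. x \<in> {- real (Suc D)..real (Suc D)}) \<and>
    (\<forall>k. integrable (matching_measure V E u) (\<lambda>x. x ^ k) \<and>
       (\<integral>x. x ^ k \<partial>matching_measure V E u) = real (closed_walks_root V E u k))"
proof -
  interpret T: lfg "path_tree_adj V E u" "Suc D" by (rule path_tree_lfg[OF assms])
  interpret H: hmom "T.Lf (ind [u])" "real (Suc D)" by (rule T.hmom_inst) simp
  define \<beta> where "\<beta> = real (Suc D)"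
  obtain M where M: "real_distribution M" and MS: "AE x in M. x \<in> {-\<beta>..\<beta>}"
    and Mk: "\<And>k. integrable M (\<lambda>x. x ^ k) \<and> (\<integral>x. x ^ k \<partial>M) = T.Lf (ind [u]) (monom 1 k)"
    using H.exists_measure unfolding \<beta>_def by blast
  have cw: "real (closed_walks_root V E u k) = T.Lf (ind [u]) (monom 1 k)" for k
    by (rule closed_walks_Lf[OF assms])
  interpret M: real_distribution M by (rule M)
  let ?P = "\<lambda>\<mu>. sets \<mu> = sets borel \<and> prob_space \<mu> \<and>
     (\<forall>k. integrable \<mu> (\<lambda>x. x ^ k) \<and> (\<integral>x. x ^ k \<partial>\<mu>) = real (closed_walks_root V E u k))"
  have PM: "?P M" using Mk cw M.prob_space_axioms by simp
  have uniq: "\<mu> = M" if P: "?P \<mu>" for \<mu>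
  proof -
    have rd: "real_distribution \<mu>" using P
      by (auto simp: real_distribution_def real_distribution_axioms_def)
    have mom: "(\<integral>x. x ^ k \<partial>\<mu>) = (\<integral>x. x ^ k \<partial>M)" for k using P Mk cw by simp
    have bnd: "(\<integral>x. x ^ (2 * k) \<partial>\<mu>) \<le> \<beta> ^ (2 * k)" for k
    proof -
      have "(\<integral>x. x ^ (2 * k) \<partial>M) \<le> (\<integral>x. \<beta> ^ (2 * k) \<partial>M)"
      proof (rule integral_mono_AE)
        show "AE x in M. x ^ (2 * k) \<le> \<beta> ^ (2 * k)"
          using MS
        proof eventually_elim
          case (elim x)
          then have "\<bar>x\<bar> \<le> \<beta>" by auto
          then have "\<bar>x\<bar> ^ (2 * k) \<le> \<beta> ^ (2 * k)" by (rule power_mono) simp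
          then show ?case by (simp add: power_even_abs)
        qed
      qed (use Mk in auto)
      also have "\<dots> = \<beta> ^ (2 * k)" using M.prob_space by simp
      finally show ?thesis using mom by simp
    qed
    have S: "AE x in \<mu>. x \<in> {-\<beta>..\<beta>}"
      by (rule moments_support[where \<beta>=\<beta>]) (use P bnd in \<open>auto simp: \<beta>_def\<close>)
    show ?thesis
      by (rule moment_unique[OF rd M S MS]) (use P Mk mom in auto)
  qed
  have eq: "matching_measure V E u = M"
    unfolding matching_measure_def by (rule the_equality) (use PM uniq in auto)
  show ?thesis unfolding eq using M MS Mk cw by (simp add: \<beta>_def)
qed


lemma "lfg.pop R p \<psi> = lfg.pop R p \<psi>" ..

context lfg
begin

lemma supp_Aop_nb: "supp (Aop \<psi>) \<subseteq> {p. nb p \<noteq> {}}"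
  by (auto simp: supp_def Aop_def)

lemma supp_pop: "supp (pop f \<psi>) \<subseteq> supp \<psi> \<union> {p. nb p \<noteq> {}}"
proof (induct f rule: pCons_induct)
  case 0 then show ?case by simp
next
  case (pCons a f)
  have "supp (pop (pCons a f) \<psi>) \<subseteq> supp (\<lambda>x. a * \<psi> x) \<union> supp (Aop (pop f \<psi>))"
    by (simp add: supp_add)
  also have "\<dots> \<subseteq> supp \<psi> \<union> {p. nb p \<noteq> {}}"
    using supp_scale[of a \<psi>] supp_Aop_nb[of "pop f \<psi>"] by auto
  finally show ?case .
qed

end

lemma mdl_mono: "max_degree_le V E D \<Longrightarrow> max_degree_le (V - {u}) E D"
proof -
  assume a: "max_degree_le V E D"
  show ?thesis unfolding max_degree_le_def
  proof
    fix x assume x: "x \<in> V - {u}"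
    have sub: "nbrs (V - {u}) E x \<subseteq> nbrs V E x" by (auto simp: nbrs_def)
    have "finite (nbrs V E x)" "card (nbrs V E x) \<le> D" using a x by (auto simp: max_degree_le_def)
    then show "finite (nbrs (V - {u}) E x) \<and> card (nbrs (V - {u}) E x) \<le> D"
      using sub by (meson card_mono finite_subset order_trans)
  qed
qed

lemma path_cons:
  assumes "u \<in> V" "p \<noteq> []"
  shows "is_path_from V E u (u # p) \<longleftrightarrow> hd p \<in> nbrs V E u \<and> is_path_from (V - {u}) E (hd p) p"
proof -
  have edges: "(\<forall>i. Suc i < length (u # p) \<longrightarrow> E ((u # p) ! i) ((u # p) ! Suc i)) \<longleftrightarrow>
      E u (hd p) \<and> (\<forall>i. Suc i < length p \<longrightarrow> E (p ! i) (p ! Suc i))"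
  proof
    assume h: "\<forall>i. Suc i < length (u # p) \<longrightarrow> E ((u # p) ! i) ((u # p) ! Suc i)"
    have "E u (hd p)" using h[rule_format, of 0] assms(2) by (simp add: hd_conv_nth)
    moreover have "\<forall>i. Suc i < length p \<longrightarrow> E (p ! i) (p ! Suc i)"
      using h by (metis Suc_less_eq length_Cons nth_Cons_Suc)
    ultimately show "E u (hd p) \<and> (\<forall>i. Suc i < length p \<longrightarrow> E (p ! i) (p ! Suc i))" ..
  next
    assume h: "E u (hd p) \<and> (\<forall>i. Suc i < length p \<longrightarrow> E (p ! i) (p ! Suc i))"
    show "\<forall>i. Suc i < length (u # p) \<longrightarrow> E ((u # p) ! i) ((u # p) ! Suc i)"
    proof (intro allI impI)
      fix i assume "Suc i < length (u # p)"
      then show "E ((u # p) ! i) ((u # p) ! Suc i)"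
        using h assms(2) by (cases i) (auto simp: hd_conv_nth)
    qed
  qed
  show ?thesis
    unfolding is_path_from_def nbrs_def edges
    using assms by (cases p) auto
qed

lemma path_single: "is_path_from V E u [u] \<longleftrightarrow> u \<in> V"
  by (simp add: is_path_from_def)



locale setting =
  fixes V :: "'a set" and E :: "'a \<Rightarrow> 'a \<Rightarrow> bool" and u :: 'a and D :: nat
  assumes sg: "simple_graph V E" and md: "max_degree_le V E D" and uV: "u \<in> V"
begin

definition N where "N = nbrs V E u"

lemma N_fin: "finite N"
  using md uV by (simp add: N_def max_degree_le_def)

lemma N_props: "v \<in> N \<Longrightarrow> v \<in> V \<and> v \<noteq> u \<and> E u v"
  using sg by (auto simp: N_def nbrs_def simple_graph_def)

sublocale T: lfg "path_tree_adj V E u" "Suc D"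
  by (rule path_tree_lfg[OF md])

lemma lfg_sub: "lfg (path_tree_adj (V - {u}) E v) (Suc D)"
  by (rule path_tree_lfg[OF mdl_mono[OF md]])

definition phi :: "real poly \<Rightarrow> 'a \<Rightarrow> 'a list \<Rightarrow> real" where
  "phi f v = lfg.pop (path_tree_adj (V - {u}) E v) f (ind [v])"

definition Phi :: "real poly \<Rightarrow> 'a list \<Rightarrow> real" where
  "Phi f q = (if q \<noteq> [] \<and> hd q = u \<and> tl q \<noteq> [] \<and> hd (tl q) \<in> N then phi f (hd (tl q)) (tl q) else 0)"

lemma path_v_single: "v \<in> N \<Longrightarrow> is_path_from (V - {u}) E v [v]"
  using N_props by (simp add: is_path_from_def)

lemma phi_supp:
  assumes "v \<in> N"
  shows "supp (phi f v) \<subseteq> {p. is_path_from (V - {u}) E v p}"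
proof -
  interpret S: lfg "path_tree_adj (V - {u}) E v" "Suc D" by (rule lfg_sub)
  have "supp (phi f v) \<subseteq> supp (ind [v]) \<union> {p. S.nb p \<noteq> {}}"
    unfolding phi_def by (rule S.supp_pop)
  also have "\<dots> \<subseteq> {p. is_path_from (V - {u}) E v p}"
    using path_v_single[OF assms] by (auto simp: S.nb_def path_tree_adj_def)
  finally show ?thesis .
qed

lemma phi_fin: "finite (supp (phi f v))"
proof -
  interpret S: lfg "path_tree_adj (V - {u}) E v" "Suc D" by (rule lfg_sub)
  show ?thesis unfolding phi_def by (rule S.fsupp_pop) simp
qed

lemma Phi_cons: "p \<noteq> [] \<Longrightarrow> hd p \<in> N \<Longrightarrow> Phi f (u # p) = phi f (hd p) p"
  by (simp add: Phi_def)

lemma Phi_nz: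
  assumes "Phi f q \<noteq> 0"
  shows "\<exists>p. q = u # p \<and> p \<noteq> [] \<and> hd p \<in> N \<and> is_path_from (V - {u}) E (hd p) p \<and> p \<in> supp (phi f (hd p))"
proof -
  from assms have c: "q \<noteq> [] \<and> hd q = u \<and> tl q \<noteq> [] \<and> hd (tl q) \<in> N"
    and nz: "phi f (hd (tl q)) (tl q) \<noteq> 0"
    by (auto simp: Phi_def split: if_splits)
  then have "tl q \<in> supp (phi f (hd (tl q)))" by (simp add: supp_def)
  moreover then have "is_path_from (V - {u}) E (hd (tl q)) (tl q)"
    using phi_supp[of "hd (tl q)" f] c by auto
  moreover have "q = u # tl q" using c by (cases q) auto
  ultimately show ?thesis using c by blast
qed

lemma supp_Phi: "supp (Phi f) \<subseteq> (\<Union>v\<in>N. (Cons u) ` supp (phi f v))"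
proof
  fix q assume "q \<in> supp (Phi f)"
  then have "Phi f q \<noteq> 0" by (simp add: supp_def)
  from Phi_nz[OF this] obtain p where "q = u # p" "hd p \<in> N" "p \<in> supp (phi f (hd p))" by blast
  then show "q \<in> (\<Union>v\<in>N. (Cons u) ` supp (phi f v))" by blast
qed

lemma fin_Phi: "finite (supp (Phi f))"
  by (rule finite_subset[OF supp_Phi]) (auto intro: N_fin phi_fin)

lemma Phi_root[simp]: "Phi f [u] = 0"
  by (simp add: Phi_def)

lemma nbT_root: "{q. path_tree_adj V E u [u] q} = (\<lambda>v. [u, v]) ` N"
proof (intro set_eqI iffI)
  fix q assume "q \<in> {q. path_tree_adj V E u [u] q}"
  then have pq: "is_path_from V E u q" and c: "(\<exists>w. q = [u] @ [w]) \<or> (\<exists>w. [u] = q @ [w])"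
    by (auto simp: path_tree_adj_def)
  have "q \<noteq> []" using pq by (simp add: is_path_from_def)
  then obtain w where q: "q = [u, w]" using c by (auto simp: Cons_eq_append_conv)
  then have "w \<in> N" using pq path_cons[OF uV, of "[w]"] by (simp add: N_def)
  then show "q \<in> (\<lambda>v. [u, v]) ` N" using q by blast
next
  fix q assume "q \<in> (\<lambda>v. [u, v]) ` N"
  then obtain v where v: "v \<in> N" and q: "q = [u, v]" by blast
  have "is_path_from V E u [u, v]"
    using path_cons[OF uV, of "[v]"] v path_v_single[OF v] by (simp add: N_def)
  then show "q \<in> {q. path_tree_adj V E u [u] q}"
    using q uV by (auto simp: path_tree_adj_def path_single)
qed

lemma nbT_cons:
  assumes v: "v \<in> N" and p: "is_path_from (V - {u}) E v p"
  shows "{q. path_tree_adj V E u (u # p) q} =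
    (Cons u) ` {p'. path_tree_adj (V - {u}) E v p p'} \<union> (if p = [v] then {[u]} else {})"
proof -
  have pne: "p \<noteq> []" and hp: "hd p = v" using p by (auto simp: is_path_from_def)
  have pu: "is_path_from V E u (u # p)"
    using path_cons[OF uV pne] v p hp by (simp add: N_def)
  show ?thesis
  proof (intro set_eqI iffI)
    fix q assume "q \<in> {q. path_tree_adj V E u (u # p) q}"
    then have pq: "is_path_from V E u q" and c: "(\<exists>w. q = (u # p) @ [w]) \<or> (\<exists>w. u # p = q @ [w])"
      by (auto simp: path_tree_adj_def)
    show "q \<in> (Cons u) ` {p'. path_tree_adj (V - {u}) E v p p'} \<union> (if p = [v] then {[u]} else {})"
    proof (cases "\<exists>w. q = (u # p) @ [w]")
      case True
      then obtain w where q: "q = u # (p @ [w])" by auto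
      have "is_path_from (V - {u}) E v (p @ [w])"
        using pq path_cons[OF uV, of "p @ [w]"] q pne hp by (simp add: N_def)
      then have "path_tree_adj (V - {u}) E v p (p @ [w])"
        using p by (auto simp: path_tree_adj_def)
      then show ?thesis using q by blast
    next
      case False
      then obtain w where e: "u # p = q @ [w]" using c by blast
      have qne: "q \<noteq> []" using pq by (simp add: is_path_from_def)
      then obtain q' where q: "q = u # q'" and pe: "p = q' @ [w]"
        using e by (cases q) auto
      show ?thesis
      proof (cases "q' = []")
        case True
        then have "p = [v]" using pe hp by simp
        then show ?thesis using q True by simp
      next
        case False
        have hq: "hd q' = v" using pe hp False by simp
        have "is_path_from (V - {u}) E v q'"
          using pq path_cons[OF uV False] q hq by simp
        then have "path_tree_adj (V - {u}) E v p q'"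
          using p pe by (auto simp: path_tree_adj_def)
        then show ?thesis using q by blast
      qed
    qed
  next
    fix q assume "q \<in> (Cons u) ` {p'. path_tree_adj (V - {u}) E v p p'} \<union> (if p = [v] then {[u]} else {})"
    then consider p' where "q = u # p'" "path_tree_adj (V - {u}) E v p p'" | "p = [v]" "q = [u]"
      by (auto split: if_splits)
    then show "q \<in> {q. path_tree_adj V E u (u # p) q}"
    proof cases
      case 1
      then have pp': "is_path_from (V - {u}) E v p'" and c: "(\<exists>w. p' = p @ [w]) \<or> (\<exists>w. p = p' @ [w])"
        by (auto simp: path_tree_adj_def)
      have "p' \<noteq> []" "hd p' = v" using pp' by (auto simp: is_path_from_def)
      then have "is_path_from V E u (u # p')"
        using path_cons[OF uV, of p'] v pp' by (simp add: N_def)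
      then show ?thesis using 1 pu c by (auto simp: path_tree_adj_def)
    next
      case 2
      then show ?thesis using pu uV by (auto simp: path_tree_adj_def path_single)
    qed
  qed
qed

end


context setting
begin

definition Lv :: "'a \<Rightarrow> real poly \<Rightarrow> real" where
  "Lv v = lfg.Lf (path_tree_adj (V - {u}) E v) (ind [v])"

lemma phi_X: "phi ([:0, 1:] * f) v = lfg.Aop (path_tree_adj (V - {u}) E v) (phi f v)"
proof -
  interpret S: lfg "path_tree_adj (V - {u}) E v" "Suc D" by (rule lfg_sub)
  show ?thesis unfolding phi_def by (simp only: S.pop_mult S.pop_X)
qed

lemma phi_add: "phi (f + g) v p = phi f v p + phi g v p"
proof -
  interpret S: lfg "path_tree_adj (V - {u}) E v" "Suc D" by (rule lfg_sub)
  show ?thesis unfolding phi_def by (simp add: S.pop_add)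
qed

lemma phi_smult: "phi (smult c f) v p = c * phi f v p"
proof -
  interpret S: lfg "path_tree_adj (V - {u}) E v" "Suc D" by (rule lfg_sub)
  show ?thesis unfolding phi_def by (simp add: S.pop_smult)
qed

lemma Phi_add: "Phi (f + g) = (\<lambda>q. Phi f q + Phi g q)"
  by (auto simp: Phi_def phi_add fun_eq_iff)

lemma Phi_smult: "Phi (smult c f) = (\<lambda>q. c * Phi f q)"
  by (auto simp: Phi_def phi_smult fun_eq_iff)

lemma phi_root: "phi f v [v] = Lv v f"
proof -
  interpret S: lfg "path_tree_adj (V - {u}) E v" "Suc D" by (rule lfg_sub)
  have "finite (supp (phi f v))" by (rule phi_fin)
  then show ?thesis by (simp add: Lv_def S.Lf_def phi_def ip_ind_right)
qed

lemma phi_norm: "ip (phi f v) (phi g v) = Lv v (f * g)"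
proof -
  interpret S: lfg "path_tree_adj (V - {u}) E v" "Suc D" by (rule lfg_sub)
  show ?thesis by (simp add: Lv_def S.Lf_mult phi_def)
qed

lemma Aop_Phi:
  "T.Aop (Phi f) q = Phi ([:0, 1:] * f) q + (if q = [u] then (\<Sum>v\<in>N. phi f v [v]) else 0)"
proof -
  consider "q = [u]"
    | p where "q = u # p" "p \<noteq> []" "hd p \<in> N" "is_path_from (V - {u}) E (hd p) p"
    | "\<not> is_path_from V E u q"
  proof -
    assume c1: "q = [u] \<Longrightarrow> thesis"
      and c2: "\<And>p. q = u # p \<Longrightarrow> p \<noteq> [] \<Longrightarrow> hd p \<in> N \<Longrightarrow> is_path_from (V - {u}) E (hd p) p \<Longrightarrow> thesis"
      and c3: "\<not> is_path_from V E u q \<Longrightarrow> thesis"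
    show thesis
    proof (cases "q = [u]")
      case True then show ?thesis by (rule c1)
    next
      case qu: False
      show ?thesis
      proof (cases "is_path_from V E u q")
        case False then show ?thesis by (rule c3)
      next
        case True
        then have "q \<noteq> []" "hd q = u" by (auto simp: is_path_from_def)
        then obtain p where q: "q = u # p" by (cases q) auto
        with qu have pne: "p \<noteq> []" by auto
        from True q path_cons[OF uV pne] have "hd p \<in> N" "is_path_from (V - {u}) E (hd p) p"
          by (auto simp: N_def)
        then show ?thesis using c2 q pne by blast
      qed
    qed
  qed
  then show ?thesis
  proof cases
    case 1
    have inj: "inj_on (\<lambda>v. [u, v]) N" by (auto simp: inj_on_def)
    have "T.Aop (Phi f) [u] = (\<Sum>q'\<in>(\<lambda>v. [u, v]) ` N. Phi f q')"
      by (simp add: T.Aop_def T.nb_def nbT_root)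
    also have "\<dots> = (\<Sum>v\<in>N. Phi f [u, v])"
      by (simp add: sum.reindex[OF inj])
    also have "\<dots> = (\<Sum>v\<in>N. phi f v [v])"
      by (intro sum.cong refl) (simp add: Phi_cons)
    finally show ?thesis using 1 by simp
  next
    case (2 p)
    define v where "v = hd p"
    interpret S: lfg "path_tree_adj (V - {u}) E v" "Suc D" by (rule lfg_sub)
    have v: "v \<in> N" and pv: "is_path_from (V - {u}) E v p" using 2 by (auto simp: v_def)
    have nbv_fin: "finite {p'. path_tree_adj (V - {u}) E v p p'}"
      using S.nb_fin by (simp add: S.nb_def)
    have nbv_ne: "[] \<notin> {p'. path_tree_adj (V - {u}) E v p p'}"
      by (auto simp: path_tree_adj_def is_path_from_def)
    define X where "X = (if p = [v] then {[u]} else ({} :: 'a list set))"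
    have X: "finite X" "\<forall>x\<in>X. Phi f x = 0" by (auto simp: X_def)
    have disj: "(Cons u) ` {p'. path_tree_adj (V - {u}) E v p p'} \<inter> X = {}"
      using nbv_ne by (auto simp: X_def)
    have "T.Aop (Phi f) q = (\<Sum>q'\<in>(Cons u) ` {p'. path_tree_adj (V - {u}) E v p p'} \<union> X. Phi f q')"
      unfolding T.Aop_def T.nb_def 2(1) nbT_cons[OF v pv] X_def ..
    also have "\<dots> = (\<Sum>q'\<in>(Cons u) ` {p'. path_tree_adj (V - {u}) E v p p'}. Phi f q') + (\<Sum>q'\<in>X. Phi f q')"
      by (rule sum.union_disjoint) (use nbv_fin X disj in auto)
    also have "(\<Sum>q'\<in>X. Phi f q') = 0" using X by simp
    also have "(\<Sum>q'\<in>(Cons u) ` {p'. path_tree_adj (V - {u}) E v p p'}. Phi f q')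
        = (\<Sum>p'\<in>{p'. path_tree_adj (V - {u}) E v p p'}. Phi f (u # p'))"
      by (simp add: sum.reindex)
    also have "\<dots> = (\<Sum>p'\<in>{p'. path_tree_adj (V - {u}) E v p p'}. phi f v p')"
    proof (intro sum.cong refl)
      fix p' assume "p' \<in> {p'. path_tree_adj (V - {u}) E v p p'}"
      then have "is_path_from (V - {u}) E v p'" by (simp add: path_tree_adj_def)
      then have "p' \<noteq> []" "hd p' = v" by (auto simp: is_path_from_def)
      then show "Phi f (u # p') = phi f v p'" using v by (simp add: Phi_cons)
    qed
    also have "\<dots> = S.Aop (phi f v) p" by (simp add: S.Aop_def S.nb_def)
    also have "\<dots> = phi ([:0, 1:] * f) v p" by (simp only: phi_X)
    also have "\<dots> = Phi ([:0, 1:] * f) q" using 2 by (simp add: Phi_cons v_def)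
    finally show ?thesis using 2 by simp
  next
    case 3
    have "T.nb q = {}" using 3 by (auto simp: T.nb_def path_tree_adj_def)
    then have "T.Aop (Phi f) q = 0" by (simp add: T.Aop_def)
    moreover have "q \<noteq> [u]" using 3 uV by (auto simp: path_single)
    moreover have "Phi ([:0, 1:] * f) q = 0"
    proof (rule ccontr)
      assume "Phi ([:0, 1:] * f) q \<noteq> 0"
      from Phi_nz[OF this] obtain p where "q = u # p" "p \<noteq> []" "hd p \<in> N"
        "is_path_from (V - {u}) E (hd p) p" by blast
      then have "is_path_from V E u q" using path_cons[OF uV] by (simp add: N_def)
      with 3 show False by simp
    qed
    ultimately show ?thesis by simp
  qed
qed

lemma Phi_norm: "ip (Phi f) (Phi g) = (\<Sum>v\<in>N. Lv v (f * g))"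
proof -
  define F where "F v = supp (phi f v)" for v
  have finF: "finite (F v)" for v by (simp add: F_def phi_fin)
  have "ip (Phi f) (Phi g) = (\<Sum>q\<in>(\<Union>v\<in>N. (Cons u) ` F v). Phi f q * Phi g q)"
    by (rule ip_eq) (use supp_Phi N_fin finF in \<open>auto simp: F_def\<close>)
  also have "\<dots> = (\<Sum>v\<in>N. \<Sum>q\<in>(Cons u) ` F v. Phi f q * Phi g q)"
  proof (rule sum.UNION_disjoint)
    show "finite N" by (rule N_fin)
    show "\<forall>v\<in>N. finite ((Cons u) ` F v)" using finF by auto
    show "\<forall>v\<in>N. \<forall>w\<in>N. v \<noteq> w \<longrightarrow> (Cons u) ` F v \<inter> (Cons u) ` F w = {}"
    proof (intro ballI impI)
      fix v w assume v: "v \<in> N" and w: "w \<in> N" and vw: "v \<noteq> w"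
      have "hd p = v" if "p \<in> F v" for p using phi_supp[OF v] that by (auto simp: F_def is_path_from_def)
      moreover have "hd p = w" if "p \<in> F w" for p using phi_supp[OF w] that by (auto simp: F_def is_path_from_def)
      ultimately show "(Cons u) ` F v \<inter> (Cons u) ` F w = {}" using vw by auto
    qed
  qed
  also have "\<dots> = (\<Sum>v\<in>N. \<Sum>p\<in>F v. phi f v p * phi g v p)"
  proof (rule sum.cong[OF refl])
    fix v assume v: "v \<in> N"
    have "(\<Sum>q\<in>(Cons u) ` F v. Phi f q * Phi g q) = (\<Sum>p\<in>F v. Phi f (u # p) * Phi g (u # p))"
      by (simp add: sum.reindex)
    also have "\<dots> = (\<Sum>p\<in>F v. phi f v p * phi g v p)"
    proof (rule sum.cong[OF refl])
      fix p assume "p \<in> F v"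
      then have "is_path_from (V - {u}) E v p" using phi_supp[OF v] by (auto simp: F_def)
      then have "p \<noteq> []" "hd p = v" by (auto simp: is_path_from_def)
      then show "Phi f (u # p) * Phi g (u # p) = phi f v p * phi g v p" using v by (simp add: Phi_cons)
    qed
    finally show "(\<Sum>q\<in>(Cons u) ` F v. Phi f q * Phi g q) = (\<Sum>p\<in>F v. phi f v p * phi g v p)" .
  qed
  also have "\<dots> = (\<Sum>v\<in>N. Lv v (f * g))"
    by (rule sum.cong[OF refl]) (simp add: F_def ip_def[symmetric] phi_norm)
  finally show ?thesis .
qed

definition L0 :: "real poly \<Rightarrow> real" where "L0 = T.Lf (ind [u])"

lemma key_identity:
  "ip (T.pop ([:- \<theta>, 1:] * p) (ind [u])) (Phi f)
    = ip (T.pop p (ind [u])) (Phi ([:- \<theta>, 1:] * f)) + (\<Sum>v\<in>N. Lv v f) * L0 p"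
proof -
  define e where "e = ind [u]"
  define s where "s = (\<Sum>v\<in>N. Lv v f)"
  have fe: "finite (supp e)" by (simp add: e_def)
  have fpe: "finite (supp (T.pop q e))" for q by (rule T.fsupp_pop[OF fe])
  have fP: "finite (supp (Phi g))" for g by (rule fin_Phi)
  have s_eq: "(\<Sum>v\<in>N. phi f v [v]) = s" by (simp add: s_def phi_root)
  have A: "T.Aop (Phi f) = (\<lambda>q. Phi ([:0, 1:] * f) q + s * e q)"
    by (rule ext) (simp add: Aop_Phi s_eq e_def ind_def)
  have star: "ip (T.pop ([:0, 1:] * p) e) (Phi f) = ip (T.pop p e) (Phi ([:0, 1:] * f)) + s * L0 p"
  proof -
    have "ip (T.pop ([:0, 1:] * p) e) (Phi f) = ip (T.Aop (T.pop p e)) (Phi f)"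
      by (simp only: T.pop_mult T.pop_X)
    also have "\<dots> = ip (T.pop p e) (T.Aop (Phi f))"
      by (rule T.Aop_sym[OF fpe fP])
    also have "\<dots> = ip (T.pop p e) (Phi ([:0, 1:] * f)) + s * ip (T.pop p e) e"
      unfolding A by (simp add: ip_add_right ip_scale_right)
    finally show ?thesis by (simp add: L0_def T.Lf_def e_def)
  qed
  have m1: "[:- \<theta>, 1:] * p = [:0, 1:] * p + smult (- \<theta>) p" for p :: "real poly"
    by (simp add: algebra_simps)
  have "ip (T.pop ([:- \<theta>, 1:] * p) e) (Phi f) = ip (\<lambda>x. T.pop ([:0, 1:] * p) e x + (- \<theta>) * T.pop p e x) (Phi f)"
    by (simp only: m1 T.pop_add T.pop_smult)
  also have "\<dots> = ip (T.pop ([:0, 1:] * p) e) (Phi f) + ip (\<lambda>x. (- \<theta>) * T.pop p e x) (Phi f)"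
    by (rule ip_add_left[OF fpe fsupp_scale[OF fpe]])
  also have "\<dots> = ip (T.pop ([:0, 1:] * p) e) (Phi f) + (- \<theta>) * ip (T.pop p e) (Phi f)"
    by (simp only: ip_scale_left)
  also have "\<dots> = ip (T.pop p e) (Phi ([:0, 1:] * f)) + (- \<theta>) * ip (T.pop p e) (Phi f) + s * L0 p"
    using star by simp
  also have "ip (T.pop p e) (Phi ([:0, 1:] * f)) + (- \<theta>) * ip (T.pop p e) (Phi f)
      = ip (T.pop p e) (Phi ([:- \<theta>, 1:] * f))"
  proof -
    have "Phi ([:- \<theta>, 1:] * f) = (\<lambda>q. Phi ([:0, 1:] * f) q + (- \<theta>) * Phi f q)"
      by (simp only: m1 Phi_add Phi_smult)
    then show ?thesis by (simp only: ip_add_right ip_scale_right)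
  qed
  finally show ?thesis by (simp add: e_def s_def)
qed

lemma key_ineq:
  "\<bar>(\<Sum>v\<in>N. Lv v f) * L0 p\<bar> \<le>
     sqrt (L0 (([:- \<theta>, 1:] * p) * ([:- \<theta>, 1:] * p))) * sqrt (\<Sum>v\<in>N. Lv v (f * f))
   + sqrt (L0 (p * p)) * sqrt (\<Sum>v\<in>N. Lv v (([:- \<theta>, 1:] * f) * ([:- \<theta>, 1:] * f)))"
proof -
  define e where "e = ind [u]"
  have fe: "finite (supp e)" by (simp add: e_def)
  have fpe: "finite (supp (T.pop q e))" for q by (rule T.fsupp_pop[OF fe])
  have nrm: "ip (T.pop q e) (T.pop q e) = L0 (q * q)" for q
    by (simp add: L0_def T.Lf_mult fe e_def)
  let ?q = "[:- \<theta>, 1:] * p" and ?g = "[:- \<theta>, 1:] * f"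
  have "(\<Sum>v\<in>N. Lv v f) * L0 p = ip (T.pop ?q e) (Phi f) - ip (T.pop p e) (Phi ?g)"
    using key_identity[of \<theta> p f] by (simp add: e_def)
  then have "\<bar>(\<Sum>v\<in>N. Lv v f) * L0 p\<bar> \<le> \<bar>ip (T.pop ?q e) (Phi f)\<bar> + \<bar>ip (T.pop p e) (Phi ?g)\<bar>"
    by simp
  also have "\<dots> \<le> sqrt (ip (T.pop ?q e) (T.pop ?q e)) * sqrt (ip (Phi f) (Phi f))
      + sqrt (ip (T.pop p e) (T.pop p e)) * sqrt (ip (Phi ?g) (Phi ?g))"
    by (intro add_mono ip_CS_abs fpe fin_Phi)
  finally show ?thesis by (simp add: nrm Phi_norm)
qed

end


context lfg
begin

lemma Lf_0: "Lf e 0 = 0"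
  using Lf_smult[of e 0 0] by simp

lemma Lf_sum: "finite (supp e) \<Longrightarrow> Lf e (\<Sum>i\<in>I. f i) = (\<Sum>i\<in>I. Lf e (f i))"
  by (induct I rule: infinite_finite_induct) (auto simp: Lf_0 Lf_add)

lemma Lf_poly:
  assumes fe: "finite (supp e)"
    and mom: "\<And>k. integrable M (\<lambda>x. x ^ k) \<and> (\<integral>x. x ^ k \<partial>M) = Lf e (monom 1 k)"
  shows "integrable M (poly p) \<and> Lf e p = (\<integral>x. poly p x \<partial>M)"
proof -
  have pe: "poly p = (\<lambda>x. \<Sum>i\<le>degree p. coeff p i * x ^ i)" by (simp add: poly_altdef fun_eq_iff)
  have int: "integrable M (poly p)" unfolding pe using mom by auto
  have "Lf e p = Lf e (\<Sum>i\<le>degree p. smult (coeff p i) (monom 1 i))"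
    by (simp add: smult_monom poly_as_sum_of_monoms)
  also have "\<dots> = (\<Sum>i\<le>degree p. coeff p i * Lf e (monom 1 i))"
    by (simp add: Lf_sum[OF fe] Lf_smult)
  also have "\<dots> = (\<Sum>i\<le>degree p. coeff p i * (\<integral>x. x ^ i \<partial>M))"
    using mom by simp
  also have "\<dots> = (\<integral>x. poly p x \<partial>M)"
    unfolding pe using mom by (simp add: integral_sum)
  finally show ?thesis using int by simp
qed

end

lemma dct_supp:
  fixes s :: "nat \<Rightarrow> real \<Rightarrow> real"
  assumes M: "real_distribution M" and S: "AE x in M. x \<in> S"
    and sm: "\<And>t. s t \<in> borel_measurable borel" and fm: "f \<in> borel_measurable borel"
    and lim: "\<And>x. x \<in> S \<Longrightarrow> (\<lambda>t. s t x) \<longlonglongrightarrow> f x"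
    and bd: "\<And>t x. x \<in> S \<Longrightarrow> \<bar>s t x\<bar> \<le> B"
  shows "(\<lambda>t. integral\<^sup>L M (s t)) \<longlonglongrightarrow> integral\<^sup>L M f"
proof -
  interpret real_distribution M by (rule M)
  show ?thesis
  proof (rule integral_dominated_convergence[where w="\<lambda>x. B"])
    show "AE x in M. (\<lambda>i. s i x) \<longlonglongrightarrow> f x" using S by eventually_elim (rule lim)
    show "AE x in M. norm (s i x) \<le> B" for i using S by eventually_elim (simp add: bd)
  qed (use sm fm in auto)
qed

context setting
begin

definition nu where "nu = matching_measure V E u"
definition nuv where "nuv v = matching_measure (V - {u}) E v"
definition \<beta> where "\<beta> = real (Suc D)"

lemma nu_char: "real_distribution nu" "AE x in nu. x \<in> {-\<beta>..\<beta>}"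
  "\<And>k. integrable nu (\<lambda>x. x ^ k) \<and> (\<integral>x. x ^ k \<partial>nu) = L0 (monom 1 k)"
proof -
  have c: "real_distribution (matching_measure V E u) \<and>
    (AE x in matching_measure V E u. x \<in> {- real (Suc D)..real (Suc D)}) \<and>
    (\<forall>k. integrable (matching_measure V E u) (\<lambda>x. x ^ k) \<and>
       (\<integral>x. x ^ k \<partial>matching_measure V E u) = real (closed_walks_root V E u k))"
    by (rule matching_measure_char[OF md])
  have cw: "real (closed_walks_root V E u k) = L0 (monom 1 k)" for k
    unfolding L0_def by (rule closed_walks_Lf[OF md])
  show "real_distribution nu" "AE x in nu. x \<in> {-\<beta>..\<beta>}"
    "\<And>k. integrable nu (\<lambda>x. x ^ k) \<and> (\<integral>x. x ^ k \<partial>nu) = L0 (monom 1 k)"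
    using c unfolding nu_def \<beta>_def cw by auto
qed

lemma nuv_char: "real_distribution (nuv v)" "AE x in nuv v. x \<in> {-\<beta>..\<beta>}"
  "\<And>k. integrable (nuv v) (\<lambda>x. x ^ k) \<and> (\<integral>x. x ^ k \<partial>nuv v) = Lv v (monom 1 k)"
proof -
  have c: "real_distribution (matching_measure (V - {u}) E v) \<and>
    (AE x in matching_measure (V - {u}) E v. x \<in> {- real (Suc D)..real (Suc D)}) \<and>
    (\<forall>k. integrable (matching_measure (V - {u}) E v) (\<lambda>x. x ^ k) \<and>
       (\<integral>x. x ^ k \<partial>matching_measure (V - {u}) E v) = real (closed_walks_root (V - {u}) E v k))"
    by (rule matching_measure_char[OF mdl_mono[OF md]])
  have cw: "real (closed_walks_root (V - {u}) E v k) = Lv v (monom 1 k)" for k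
    unfolding Lv_def by (rule closed_walks_Lf[OF mdl_mono[OF md]])
  show "real_distribution (nuv v)" "AE x in nuv v. x \<in> {-\<beta>..\<beta>}"
    "\<And>k. integrable (nuv v) (\<lambda>x. x ^ k) \<and> (\<integral>x. x ^ k \<partial>nuv v) = Lv v (monom 1 k)"
    using c unfolding nuv_def \<beta>_def cw by auto
qed

lemma L0_int: "integrable nu (poly p) \<and> L0 p = (\<integral>x. poly p x \<partial>nu)"
  unfolding L0_def by (rule T.Lf_poly) (use nu_char(3) in \<open>auto simp: L0_def\<close>)

lemma Lv_int: "integrable (nuv v) (poly p) \<and> Lv v p = (\<integral>x. poly p x \<partial>nuv v)"
proof -
  interpret S: lfg "path_tree_adj (V - {u}) E v" "Suc D" by (rule lfg_sub)
  show ?thesis unfolding Lv_def by (rule S.Lf_poly) (use nuv_char(3) in \<open>auto simp: Lv_def\<close>)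
qed

lemma key_ineq_int:
  "\<bar>(\<Sum>v\<in>N. \<integral>x. poly f x \<partial>nuv v) * (\<integral>x. poly p x \<partial>nu)\<bar> \<le>
     sqrt (\<integral>x. ((x - \<theta>) * poly p x)\<^sup>2 \<partial>nu) * sqrt (\<Sum>v\<in>N. \<integral>x. (poly f x)\<^sup>2 \<partial>nuv v)
   + sqrt (\<integral>x. (poly p x)\<^sup>2 \<partial>nu) * sqrt (\<Sum>v\<in>N. \<integral>x. ((x - \<theta>) * poly f x)\<^sup>2 \<partial>nuv v)"
proof -
  have e1: "poly (([:- \<theta>, 1:] * q) * ([:- \<theta>, 1:] * q)) = (\<lambda>x. ((x - \<theta>) * poly q x)\<^sup>2)" for q :: "real poly"
    by (simp add: fun_eq_iff power2_eq_square algebra_simps)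
  have e3: "poly ([:- \<theta>, 1:] * q) = (\<lambda>x. (x - \<theta>) * poly q x)" for q :: "real poly"
    by (rule ext) (simp add: algebra_simps)
  have e2: "poly (q * q) = (\<lambda>x. (poly q x)\<^sup>2)" for q :: "real poly"
    by (rule ext) (simp only: poly_mult power2_eq_square)
  show ?thesis
    using key_ineq[of f p \<theta>] by (simp only: L0_int Lv_int e2 e3)
qed

end


context setting
begin

lemma beta_pos: "0 < \<beta>" by (simp add: \<beta>_def)

lemma meas_sing: "real_distribution M \<Longrightarrow> integral\<^sup>L M (indicator {t}) = measure M {t}"
  by (simp add: real_distribution.space_eq_univ)

lemma poly_ineq:
  "(\<Sum>v\<in>N. measure (nuv v) {\<theta>}) * (\<integral>x. poly p x \<partial>nu)\<^sup>2 \<le> (\<integral>x. ((x - \<theta>) * poly p x)\<^sup>2 \<partial>nu)"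
proof -
  define c where "c = (\<Sum>v\<in>N. measure (nuv v) {\<theta>})"
  define K where "K = (\<beta> + \<bar>\<theta>\<bar>)\<^sup>2 + 1"
  define h where "h x = 1 - (x - \<theta>)\<^sup>2 / K" for x
  define ft where "ft t = ([:1:] - smult (1/K) ([:- \<theta>, 1:] * [:- \<theta>, 1:])) ^ t" for t :: nat
  have K0: "0 < K" unfolding K_def by (rule add_nonneg_pos) simp_all
  have pft: "poly (ft t) x = (h x) ^ t" for t x
  proof -
    have "poly ([:1:] - smult (1/K) ([:- \<theta>, 1:] * [:- \<theta>, 1:])) x = h x"
      using K0 by (simp add: h_def power2_eq_square field_simps)
    then show ?thesis by (simp add: ft_def poly_power)
  qed
  have hS: "0 \<le> h x \<and> h x \<le> 1 \<and> (x \<noteq> \<theta> \<longrightarrow> h x < 1)" if "x \<in> {-\<beta>..\<beta>}" for x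
  proof -
    have "\<bar>x - \<theta>\<bar> \<le> \<beta> + \<bar>\<theta>\<bar>" using that by auto
    then have "(x - \<theta>)\<^sup>2 \<le> (\<beta> + \<bar>\<theta>\<bar>)\<^sup>2"
      by (metis abs_ge_zero power2_abs power_mono)
    then have "(x - \<theta>)\<^sup>2 \<le> K" by (simp add: K_def)
    then have "(x - \<theta>)\<^sup>2 / K \<le> 1" using K0 by simp
    moreover have "x \<noteq> \<theta> \<longrightarrow> 0 < (x - \<theta>)\<^sup>2 / K" using K0 by simp
    ultimately show ?thesis by (auto simp: h_def)
  qed
  have lim_pow: "(\<lambda>t. (h x) ^ t) \<longlonglongrightarrow> indicator {\<theta>} x" if "x \<in> {-\<beta>..\<beta>}" for x
  proof (cases "x = \<theta>")
    case True then show ?thesis by (simp add: h_def)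
  next
    case False
    then have "\<bar>h x\<bar> < 1" using hS[OF that] by auto
    then show ?thesis using False by (simp add: LIMSEQ_power_zero)
  qed
  have bnd_pow: "\<bar>(h x) ^ t\<bar> \<le> 1" if "x \<in> {-\<beta>..\<beta>}" for x t
    using hS[OF that] by (simp add: power_le_one power_abs)
  have meas: "(\<lambda>x. poly q x) \<in> borel_measurable borel" for q :: "real poly"
    by (intro borel_measurable_continuous_onI continuous_intros)
  have l1: "(\<lambda>t. \<integral>x. poly (ft t) x \<partial>nuv v) \<longlonglongrightarrow> measure (nuv v) {\<theta>}" for v
  proof -
    have "(\<lambda>t. \<integral>x. (h x) ^ t \<partial>nuv v) \<longlonglongrightarrow> integral\<^sup>L (nuv v) (indicator {\<theta>})"
      by (rule dct_supp[OF nuv_char(1) nuv_char(2), where B=1])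
         (use lim_pow bnd_pow in \<open>auto simp: h_def\<close>)
    then show ?thesis by (simp add: pft real_distribution.space_eq_univ[OF nuv_char(1)])
  qed
  have l2: "(\<lambda>t. \<integral>x. (poly (ft t) x)\<^sup>2 \<partial>nuv v) \<longlonglongrightarrow> measure (nuv v) {\<theta>}" for v
  proof -
    have "(\<lambda>t. \<integral>x. ((h x) ^ t)\<^sup>2 \<partial>nuv v) \<longlonglongrightarrow> integral\<^sup>L (nuv v) (indicator {\<theta>})"
    proof (rule dct_supp[OF nuv_char(1) nuv_char(2), where B=1])
      fix x :: real assume x: "x \<in> {-\<beta>..\<beta>}"
      have "(\<lambda>t. ((h x) ^ t)\<^sup>2) \<longlonglongrightarrow> (indicator {\<theta>} x)\<^sup>2"
        by (intro tendsto_intros lim_pow[OF x])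
      moreover have "(indicator {\<theta>} x :: real)\<^sup>2 = indicator {\<theta>} x" by (simp add: indicator_def)
      ultimately show "(\<lambda>t. ((h x) ^ t)\<^sup>2) \<longlonglongrightarrow> indicator {\<theta>} x" by simp
      show "\<bar>((h x) ^ t)\<^sup>2\<bar> \<le> 1" for t
        using bnd_pow[OF x, of t] by (simp add: abs_square_le_1)
    qed (auto simp: h_def)
    then show ?thesis by (simp add: pft real_distribution.space_eq_univ[OF nuv_char(1)])
  qed
  have l3: "(\<lambda>t. \<integral>x. ((x - \<theta>) * poly (ft t) x)\<^sup>2 \<partial>nuv v) \<longlonglongrightarrow> 0" for v
  proof -
    have "(\<lambda>t. \<integral>x. ((x - \<theta>) * (h x) ^ t)\<^sup>2 \<partial>nuv v) \<longlonglongrightarrow> integral\<^sup>L (nuv v) (\<lambda>x. 0)"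
    proof (rule dct_supp[OF nuv_char(1) nuv_char(2), where B="(\<beta> + \<bar>\<theta>\<bar>)\<^sup>2"])
      fix x :: real assume x: "x \<in> {-\<beta>..\<beta>}"
      have "(\<lambda>t. ((x - \<theta>) * (h x) ^ t)\<^sup>2) \<longlonglongrightarrow> ((x - \<theta>) * indicator {\<theta>} x)\<^sup>2"
        by (intro tendsto_intros lim_pow[OF x])
      moreover have "((x - \<theta>) * (indicator {\<theta>} x :: real))\<^sup>2 = 0" by (simp add: indicator_def)
      ultimately show "(\<lambda>t. ((x - \<theta>) * (h x) ^ t)\<^sup>2) \<longlonglongrightarrow> 0" by simp
      show "\<bar>((x - \<theta>) * (h x) ^ t)\<^sup>2\<bar> \<le> (\<beta> + \<bar>\<theta>\<bar>)\<^sup>2" for t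
      proof -
        have a: "\<bar>x - \<theta>\<bar> \<le> \<beta> + \<bar>\<theta>\<bar>" using x by auto
        have "\<bar>(x - \<theta>) * (h x) ^ t\<bar> \<le> (\<beta> + \<bar>\<theta>\<bar>) * 1"
          unfolding abs_mult by (rule mult_mono) (use a bnd_pow[OF x, of t] in auto)
        then have "((x - \<theta>) * (h x) ^ t)\<^sup>2 \<le> (\<beta> + \<bar>\<theta>\<bar>)\<^sup>2"
          by (metis abs_ge_zero mult.right_neutral power2_abs power_mono)
        then show ?thesis by simp
      qed
    qed (auto simp: h_def)
    then show ?thesis by (simp add: pft)
  qed
  define I where "I = (\<integral>x. poly p x \<partial>nu)"
  define A where "A = (\<integral>x. ((x - \<theta>) * poly p x)\<^sup>2 \<partial>nu)"
  define B where "B = (\<integral>x. (poly p x)\<^sup>2 \<partial>nu)"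
  have ineq: "\<bar>(\<Sum>v\<in>N. \<integral>x. poly (ft t) x \<partial>nuv v) * I\<bar> \<le>
     sqrt A * sqrt (\<Sum>v\<in>N. \<integral>x. (poly (ft t) x)\<^sup>2 \<partial>nuv v)
   + sqrt B * sqrt (\<Sum>v\<in>N. \<integral>x. ((x - \<theta>) * poly (ft t) x)\<^sup>2 \<partial>nuv v)" for t
    unfolding I_def A_def B_def by (rule key_ineq_int)
  have limL: "(\<lambda>t. \<bar>(\<Sum>v\<in>N. \<integral>x. poly (ft t) x \<partial>nuv v) * I\<bar>) \<longlonglongrightarrow> \<bar>c * I\<bar>"
    unfolding c_def by (intro tendsto_intros l1)
  have limR: "(\<lambda>t. sqrt A * sqrt (\<Sum>v\<in>N. \<integral>x. (poly (ft t) x)\<^sup>2 \<partial>nuv v)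
   + sqrt B * sqrt (\<Sum>v\<in>N. \<integral>x. ((x - \<theta>) * poly (ft t) x)\<^sup>2 \<partial>nuv v))
     \<longlonglongrightarrow> sqrt A * sqrt c + sqrt B * sqrt (\<Sum>v\<in>N. 0)"
    unfolding c_def by (intro tendsto_intros l2 l3)
  have "\<bar>c * I\<bar> \<le> sqrt A * sqrt c"
    using tendsto_le[OF _ limR limL] ineq by simp
  moreover have c0: "0 \<le> c" unfolding c_def by (intro sum_nonneg measure_nonneg)
  moreover have A0: "0 \<le> A" unfolding A_def by simp
  ultimately have "(c * I)\<^sup>2 \<le> (sqrt A * sqrt c)\<^sup>2"
    by (metis abs_ge_zero power2_abs power_mono)
  then have "c * (c * I\<^sup>2) \<le> c * A"
    using c0 A0 by (simp add: power_mult_distrib power2_eq_square mult_ac)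
  then have "c * I\<^sup>2 \<le> A" if "0 < c" using that by simp
  moreover have "c * I\<^sup>2 \<le> A" if "c = 0" using that A0 by simp
  ultimately show ?thesis using c0 unfolding c_def I_def A_def by fastforce
qed

end


context setting
begin

lemma poly_approx:
  assumes gc: "\<And>x. isCont g x" and e: "0 < e"
  shows "\<exists>P::real poly. \<forall>x\<in>{-\<beta>..\<beta>}. \<bar>g x - poly P x\<bar> < e"
proof -
  obtain q where q: "real_polynomial_function q" and qe: "\<And>x. x \<in> {-\<beta>..\<beta>} \<Longrightarrow> \<bar>g x - q x\<bar> < e"
    using Stone_Weierstrass_real_polynomial_function[of "{-\<beta>..\<beta>}" g e] gc e
    by (auto intro: continuous_at_imp_continuous_on)
  obtain a m where qd: "q = (\<lambda>x. \<Sum>i\<le>m. a i * x ^ i)"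
    using q real_polynomial_function_iff_sum by blast
  define P where "P = (\<Sum>i\<le>m. monom (a i) i)"
  have "poly P x = q x" for x by (simp add: P_def qd poly_sum poly_monom)
  then show ?thesis using qe by (intro exI[of _ P]) auto
qed

lemma cont_ineq:
  assumes gc: "\<And>x. isCont g x" and gb: "\<And>x. \<bar>g x\<bar> \<le> B"
  shows "(\<Sum>v\<in>N. measure (nuv v) {\<theta>}) * (\<integral>x. g x \<partial>nu)\<^sup>2 \<le> (\<integral>x. ((x - \<theta>) * g x)\<^sup>2 \<partial>nu)"
proof -
  define c where "c = (\<Sum>v\<in>N. measure (nuv v) {\<theta>})"
  have "\<forall>n. \<exists>P::real poly. \<forall>x\<in>{-\<beta>..\<beta>}. \<bar>g x - poly P x\<bar> < inverse (real (Suc n))"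
    using poly_approx[OF gc] by simp
  then obtain P where P: "\<And>n x. x \<in> {-\<beta>..\<beta>} \<Longrightarrow> \<bar>g x - poly (P n) x\<bar> < inverse (real (Suc n))"
    by metis
  have meas: "(\<lambda>x. poly q x) \<in> borel_measurable borel" for q :: "real poly"
    by (intro borel_measurable_continuous_onI continuous_intros)
  have gm: "g \<in> borel_measurable borel"
    using gc by (intro borel_measurable_continuous_onI continuous_at_imp_continuous_on) auto
  have B0: "0 \<le> B" using gb[of 0] by simp
  have ptw: "(\<lambda>n. poly (P n) x) \<longlonglongrightarrow> g x" if x: "x \<in> {-\<beta>..\<beta>}" for x
  proof -
    have "(\<lambda>n. poly (P n) x - g x) \<longlonglongrightarrow> 0"
    proof (rule Lim_null_comparison[OF _ LIMSEQ_inverse_real_of_nat])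
      show "\<forall>\<^sub>F n in sequentially. norm (poly (P n) x - g x) \<le> inverse (real (Suc n))"
        using P[OF x] by (intro always_eventually allI) (simp add: abs_minus_commute less_imp_le)
    qed
    then show ?thesis by (simp add: LIM_zero_iff)
  qed
  have pb: "\<bar>poly (P n) x\<bar> \<le> B + 1" if x: "x \<in> {-\<beta>..\<beta>}" for n x
  proof -
    have "inverse (real (Suc n)) \<le> 1" by (simp add: inverse_le_1_iff)
    then show ?thesis using P[OF x, of n] gb[of x] by linarith
  qed
  have I1: "(\<lambda>n. \<integral>x. poly (P n) x \<partial>nu) \<longlonglongrightarrow> (\<integral>x. g x \<partial>nu)"
    by (rule dct_supp[OF nu_char(1) nu_char(2), where B="B + 1"]) (use meas gm ptw pb in auto)
  have I2: "(\<lambda>n. \<integral>x. ((x - \<theta>) * poly (P n) x)\<^sup>2 \<partial>nu) \<longlonglongrightarrow> (\<integral>x. ((x - \<theta>) * g x)\<^sup>2 \<partial>nu)"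
  proof (rule dct_supp[OF nu_char(1) nu_char(2), where B="((\<beta> + \<bar>\<theta>\<bar>) * (B + 1))\<^sup>2"])
    fix x :: real assume x: "x \<in> {-\<beta>..\<beta>}"
    show "(\<lambda>n. ((x - \<theta>) * poly (P n) x)\<^sup>2) \<longlonglongrightarrow> ((x - \<theta>) * g x)\<^sup>2"
      by (intro tendsto_intros ptw[OF x])
    show "\<bar>((x - \<theta>) * poly (P n) x)\<^sup>2\<bar> \<le> ((\<beta> + \<bar>\<theta>\<bar>) * (B + 1))\<^sup>2" for n
    proof -
      have a: "\<bar>x - \<theta>\<bar> \<le> \<beta> + \<bar>\<theta>\<bar>" using x by auto
      have "\<bar>(x - \<theta>) * poly (P n) x\<bar> \<le> (\<beta> + \<bar>\<theta>\<bar>) * (B + 1)"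
        unfolding abs_mult by (rule mult_mono) (use a pb[OF x, of n] in auto)
      then have "((x - \<theta>) * poly (P n) x)\<^sup>2 \<le> ((\<beta> + \<bar>\<theta>\<bar>) * (B + 1))\<^sup>2"
        by (metis abs_ge_zero power2_abs power_mono)
      then show ?thesis by simp
    qed
  qed (use meas gm in auto)
  have "(\<lambda>n. c * (\<integral>x. poly (P n) x \<partial>nu)\<^sup>2) \<longlonglongrightarrow> c * (\<integral>x. g x \<partial>nu)\<^sup>2"
    by (intro tendsto_intros I1)
  from tendsto_le[OF _ I2 this] show ?thesis
    using poly_ineq unfolding c_def by simp
qed

lemma tent_ineq:
  assumes e: "0 < \<epsilon>"
  shows "(\<Sum>v\<in>N. measure (nuv v) {\<theta>}) * (measure nu {\<theta> - \<epsilon>..\<theta> + \<epsilon>})\<^sup>2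
    \<le> 4 * \<epsilon>\<^sup>2 * measure nu {\<theta> - 2 * \<epsilon>..\<theta> + 2 * \<epsilon>}"
proof -
  define c where "c = (\<Sum>v\<in>N. measure (nuv v) {\<theta>})"
  interpret R: real_distribution nu by (rule nu_char(1))
  define \<tau> where "\<tau> x = max 0 (min 1 (2 - \<bar>x - \<theta>\<bar> / \<epsilon>))" for x
  have tc: "isCont \<tau> x" for x unfolding \<tau>_def by (intro continuous_intros) (use e in auto)
  have tb: "\<bar>\<tau> x\<bar> \<le> 1" for x unfolding \<tau>_def by auto
  have tm: "\<tau> \<in> borel_measurable borel"
    using tc by (intro borel_measurable_continuous_onI continuous_at_imp_continuous_on) auto
  have ti: "integrable nu \<tau>"
    by (rule R.integrable_const_bound[where B=1]) (use tb tm in auto)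
  have c0: "0 \<le> c" unfolding c_def by (intro sum_nonneg measure_nonneg)
  have a1: "measure nu {\<theta> - \<epsilon>..\<theta> + \<epsilon>} \<le> (\<integral>x. \<tau> x \<partial>nu)"
  proof -
    have "measure nu {\<theta> - \<epsilon>..\<theta> + \<epsilon>} = (\<integral>x. indicator {\<theta> - \<epsilon>..\<theta> + \<epsilon>} x \<partial>nu)"
      by simp
    also have "\<dots> \<le> (\<integral>x. \<tau> x \<partial>nu)"
    proof (rule integral_mono[OF _ ti])
      show "integrable nu (indicator {\<theta> - \<epsilon>..\<theta> + \<epsilon>} :: real \<Rightarrow> real)"
        by (rule R.integrable_const_bound[where B=1]) auto
      fix x show "indicator {\<theta> - \<epsilon>..\<theta> + \<epsilon>} x \<le> \<tau> x"
      proof (cases "x \<in> {\<theta> - \<epsilon>..\<theta> + \<epsilon>}")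
        case True
        then have "\<bar>x - \<theta>\<bar> \<le> \<epsilon>" by auto
        then have "\<bar>x - \<theta>\<bar> / \<epsilon> \<le> 1" using e by simp
        then show ?thesis using True by (simp add: \<tau>_def)
      next
        case False then show ?thesis by (simp add: \<tau>_def)
      qed
    qed
    finally show ?thesis .
  qed
  have a2: "(\<integral>x. ((x - \<theta>) * \<tau> x)\<^sup>2 \<partial>nu) \<le> (\<integral>x. 4 * \<epsilon>\<^sup>2 * indicator {\<theta> - 2 * \<epsilon>..\<theta> + 2 * \<epsilon>} x \<partial>nu)"
  proof (rule integral_mono)
    show "integrable nu (\<lambda>x. 4 * \<epsilon>\<^sup>2 * indicator {\<theta> - 2 * \<epsilon>..\<theta> + 2 * \<epsilon>} x :: real)"
      by (rule R.integrable_const_bound[where B="4 * \<epsilon>\<^sup>2"]) (auto simp: indicator_def)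
    have "(\<lambda>x. ((x - \<theta>) * \<tau> x)\<^sup>2) \<in> borel_measurable borel"
      using tm by measurable
    then show "integrable nu (\<lambda>x. ((x - \<theta>) * \<tau> x)\<^sup>2)"
    proof -
      assume m: "(\<lambda>x. ((x - \<theta>) * \<tau> x)\<^sup>2) \<in> borel_measurable borel"
      have "AE x in nu. norm (((x - \<theta>) * \<tau> x)\<^sup>2) \<le> ((\<beta> + \<bar>\<theta>\<bar>))\<^sup>2"
        using nu_char(2)
      proof eventually_elim
        case (elim x)
        have a: "\<bar>x - \<theta>\<bar> \<le> \<beta> + \<bar>\<theta>\<bar>" using elim by auto
        have "\<bar>(x - \<theta>) * \<tau> x\<bar> \<le> (\<beta> + \<bar>\<theta>\<bar>) * 1"
          unfolding abs_mult by (rule mult_mono) (use a tb in auto)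
        then have "((x - \<theta>) * \<tau> x)\<^sup>2 \<le> (\<beta> + \<bar>\<theta>\<bar>)\<^sup>2"
          by (metis abs_ge_zero mult.right_neutral power2_abs power_mono)
        then show ?case by simp
      qed
      then show ?thesis by (rule R.integrable_const_bound) (use m in auto)
    qed
    fix x :: real
    show "((x - \<theta>) * \<tau> x)\<^sup>2 \<le> 4 * \<epsilon>\<^sup>2 * indicator {\<theta> - 2 * \<epsilon>..\<theta> + 2 * \<epsilon>} x"
    proof (cases "x \<in> {\<theta> - 2 * \<epsilon>..\<theta> + 2 * \<epsilon>}")
      case True
      then have "\<bar>x - \<theta>\<bar> \<le> 2 * \<epsilon>" by auto
      then have "(x - \<theta>)\<^sup>2 \<le> (2 * \<epsilon>)\<^sup>2" by (metis abs_ge_zero power2_abs power_mono)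
      moreover have "(\<tau> x)\<^sup>2 \<le> 1" using tb[of x] by (simp add: abs_square_le_1)
      moreover have "0 \<le> (\<tau> x)\<^sup>2" by simp
      ultimately have "(x - \<theta>)\<^sup>2 * (\<tau> x)\<^sup>2 \<le> (2 * \<epsilon>)\<^sup>2 * 1"
        by (intro mult_mono) auto
      then show ?thesis using True by (simp add: power_mult_distrib)
    next
      case False
      then have "\<bar>x - \<theta>\<bar> > 2 * \<epsilon>" by auto
      then have "2 - \<bar>x - \<theta>\<bar> / \<epsilon> < 0" using e by (simp add: field_simps)
      then have "\<tau> x = 0" by (simp add: \<tau>_def)
      then show ?thesis by simp
    qed
  qed
  also have "\<dots> = 4 * \<epsilon>\<^sup>2 * measure nu {\<theta> - 2 * \<epsilon>..\<theta> + 2 * \<epsilon>}" by simp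
  finally have a2': "(\<integral>x. ((x - \<theta>) * \<tau> x)\<^sup>2 \<partial>nu) \<le> 4 * \<epsilon>\<^sup>2 * measure nu {\<theta> - 2 * \<epsilon>..\<theta> + 2 * \<epsilon>}" .
  have "(measure nu {\<theta> - \<epsilon>..\<theta> + \<epsilon>})\<^sup>2 \<le> (\<integral>x. \<tau> x \<partial>nu)\<^sup>2"
    using a1 by (intro power_mono) auto
  then have "c * (measure nu {\<theta> - \<epsilon>..\<theta> + \<epsilon>})\<^sup>2 \<le> c * (\<integral>x. \<tau> x \<partial>nu)\<^sup>2"
    using c0 by (rule mult_left_mono)
  also have "\<dots> \<le> (\<integral>x. ((x - \<theta>) * \<tau> x)\<^sup>2 \<partial>nu)"
    unfolding c_def by (rule cont_ineq[OF tc tb])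
  finally show ?thesis using a2' unfolding c_def by simp
qed

end


theorem proposition7p6:
  fixes \<theta> :: real and V :: "'a set" and E :: "'a \<Rightarrow> 'a \<Rightarrow> bool" and D :: nat and u :: 'a
  assumes "simple_graph V E"
    and "max_degree_le V E D"
    and "u \<in> V"
    and "theta_positive \<theta> V E u"
  shows "((\<lambda>\<epsilon>. (measure (matching_measure V E u) {\<theta> - \<epsilon>..\<theta> + \<epsilon>}
            - measure (matching_measure V E u) {\<theta>}) / \<epsilon>) \<longlongrightarrow> 0) (at_right 0)"
proof -
  interpret S: setting V E u D using assms(1-3) by unfold_locales
  define \<nu> where "\<nu> = matching_measure V E u"
  define a where "a \<epsilon> = measure \<nu> {\<theta> - \<epsilon>..\<theta> + \<epsilon>}" for \<epsilon>
  define c where "c = (\<Sum>v\<in>nbrs V E u. measure (matching_measure (V - {u}) E v) {\<theta>})"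
  interpret R: real_distribution \<nu> unfolding \<nu>_def using S.nu_char(1) by (simp add: S.nu_def)
  have c0: "0 < c" using assms(4) by (simp add: theta_positive_def c_def)
  have tent: "c * (a \<epsilon>)\<^sup>2 \<le> 4 * \<epsilon>\<^sup>2 * a (2 * \<epsilon>)" if "0 < \<epsilon>" for \<epsilon>
    using S.tent_ineq[OF that, of \<theta>]
    by (simp add: a_def c_def \<nu>_def S.nu_def S.nuv_def S.N_def)
  have a0: "0 \<le> a \<epsilon>" for \<epsilon> by (simp add: a_def)
  have a1: "a \<epsilon> \<le> 1" for \<epsilon> by (simp add: a_def)
  define K where "K = 2 / sqrt c"
  have K0: "0 < K" using c0 by (simp add: K_def)
  have K2: "K\<^sup>2 * c = 4" using c0 by (simp add: K_def power_divide)
  have lin: "a \<epsilon> \<le> K * \<epsilon>" if e: "0 < \<epsilon>" for \<epsilon>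
  proof -
    have "c * (a \<epsilon>)\<^sup>2 \<le> 4 * \<epsilon>\<^sup>2 * 1"
      using tent[OF e] a1[of "2 * \<epsilon>"] e
      by (meson mult_left_mono order_trans zero_le_mult_iff zero_le_numeral zero_le_power2)
    also have "\<dots> = c * (K * \<epsilon>)\<^sup>2" using K2 by (simp add: power_mult_distrib mult_ac)
    finally have "(a \<epsilon>)\<^sup>2 \<le> (K * \<epsilon>)\<^sup>2" using c0 by simp
    then show ?thesis using K0 e a0[of \<epsilon>] by (simp add: power2_le_iff_abs_le)
  qed
  have atom: "measure \<nu> {\<theta>} = 0"
  proof -
    have le: "measure \<nu> {\<theta>} \<le> K * \<epsilon>" if "0 < \<epsilon>" for \<epsilon>
    proof -
      have "measure \<nu> {\<theta>} \<le> a \<epsilon>" unfolding a_def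
        using that by (intro R.finite_measure_mono) auto
      with lin[OF that] show ?thesis by simp
    qed
    have "measure \<nu> {\<theta>} \<le> 0"
    proof (rule field_le_epsilon)
      fix d :: real assume "0 < d"
      then show "measure \<nu> {\<theta>} \<le> 0 + d" using le[of "d / K"] K0 by simp
    qed
    then show ?thesis by (simp add: antisym)
  qed
  define C where "C = 8 * K / c"
  have bound: "a \<epsilon> / \<epsilon> \<le> sqrt (C * \<epsilon>)" if e: "0 < \<epsilon>" for \<epsilon>
  proof -
    have "c * (a \<epsilon>)\<^sup>2 \<le> 4 * \<epsilon>\<^sup>2 * (K * (2 * \<epsilon>))"
      using tent[OF e] lin[of "2 * \<epsilon>"] e
      by (meson mult_left_mono order_trans zero_le_mult_iff zero_le_numeral zero_le_power2 mult_pos_pos zero_less_numeral)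
    then have "(a \<epsilon> / \<epsilon>)\<^sup>2 \<le> C * \<epsilon>"
      using c0 e by (simp add: C_def power_divide field_simps power2_eq_square)
    then show ?thesis by (rule real_le_rsqrt)
  qed
  have "((\<lambda>\<epsilon>. a \<epsilon> / \<epsilon>) \<longlongrightarrow> 0) (at_right 0)"
  proof (rule tendsto_sandwich[where f="\<lambda>_. 0" and h="\<lambda>\<epsilon>. sqrt (C * \<epsilon>)"])
    show "\<forall>\<^sub>F \<epsilon> in at_right 0. 0 \<le> a \<epsilon> / \<epsilon>"
      using eventually_at_right_less[of 0] by eventually_elim (simp add: a0)
    show "\<forall>\<^sub>F \<epsilon> in at_right 0. a \<epsilon> / \<epsilon> \<le> sqrt (C * \<epsilon>)"
      using eventually_at_right_less[of 0] by eventually_elim (rule bound)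
    show "((\<lambda>_. 0) \<longlongrightarrow> (0::real)) (at_right 0)" by simp
    have "((\<lambda>\<epsilon>. sqrt (C * \<epsilon>)) \<longlongrightarrow> sqrt (C * 0)) (at_right 0)"
      by (intro tendsto_intros)
    then show "((\<lambda>\<epsilon>. sqrt (C * \<epsilon>)) \<longlongrightarrow> 0) (at_right 0)" by simp
  qed
  moreover have "measure (matching_measure V E u) {\<theta>} = 0" using atom by (simp add: \<nu>_def)
  ultimately show ?thesis by (simp add: a_def \<nu>_def)
qed


end
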